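(* Let $\mathcal B$ be a BMDP such that $Q^*(q,a)<\infty$ for every type $q$ and every $a\in A(q)$, and consider the Q-learning process with learning rates $\lambda_i\in[0,1]$ satisfying $\sum_{i=0}^\infty\lambda_i=\infty$ and $\sum_{i=0}^\infty\lambda_i^2<\infty$, and a fixed selection distribution with $p_{q,a}\ge p_{\min}>0$ for all pairs. Then for every initial vector $Q_0\ge\mathbf 0$, almost surely $\limsup_{i\to\infty}Q_i(q,a)\le Q^*(q,a)$ for all pairs $(q,a)$.
   Context: A branching Markov decision process (BMDP) is a tuple $\mathcal B=(\mathcal T,A,p,c)$ where $\mathcal T$ is a finite set of types, $A$ is a finite set of actions, $p:\mathcal T\times A\to \mathrm{Dist}(\mathcal T^* )$ is a partial function assigning to some pairs $(q,a)$ a probability distribution with finite support over the set $\mathcal T^*$ of finite lists of types, and $c:\mathcal T\times A\to\mathbb R_{>0}$ is a strictly positive cost function. $A(q)$ is the (nonempty) set of $a$ with $p(q,a)$ defined. For a list $\alpha$, $|\alpha|$ is its length and $\alpha_i$ its $i$-th element. The BMDP induces an MDP on lists of entities: an action $(i,a)$ with $a\in A(\alpha_i)$ replaces entity $\alpha_i$ of the current list by a list $\beta$ drawn from $p(\alpha_i,a)$ at cost $c(\alpha_i,a)$; the empty list is absorbing with no cost. $\mathbf c^*_q\in[0,\infty]$ is the infimum over all (history-dependent, randomized) strategies of the expected total cost starting from the single entity $q$. Define $Q^*(q,a)=c(q,a)+\sum_{\alpha\in\mathcal T^*}p(q,a)(\alpha)\sum_{j=1}^{|\alpha|}\mathbf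 c^*_{\alpha_j}$ (so $\mathbf c^*_q=\min_{a\in A(q)}Q^*(q,a)$). Q-learning process for a BMDP: Q-values are vectors $Q$ indexed by pairs $(q,a)$ with $q\in\mathcal T$, $a\in A(q)$. Given deterministic learning rates $\lambda_i\in[0,1]$, a fixed probability distribution $(p_{q,a})$ over pairs and an initial vector $Q_0\ge\mathbf 0$, at each step $i$ a pair $(q_i,a_i)$ is selected with probability $p_{q_i,a_i}$ independently of all previous randomness, a list $\beta^i$ is drawn from $p(q_i,a_i)$ independently, and $Q_{i+1}(q_i,a_i)=(1-\lambda_i)Q_i(q_i,a_i)+\lambda_i\big(c(q_i,a_i)+\sum_{j=1}^{|\beta^i|}\min_{a'\in A(\beta^i_j)}Q_i(\beta^i_j,a')\big)$, all other entries unchanged. *)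

theory Defs
  imports "HOL-Probability.Probability"
begin

text \<open>A BMDP is given by: a finite type of types 'q, a finite type of actions 'a,
  the enabled-action map Act (Act q = A(q), nonempty), the transition distributions
  p q a over lists of types (only meaningful for a in Act q), and the cost c.\<close>

definition bmdp :: "('q::finite \<Rightarrow> 'a::finite set) \<Rightarrow> ('q \<Rightarrow> 'a \<Rightarrow> 'q list pmf)
     \<Rightarrow> ('q \<Rightarrow> 'a \<Rightarrow> real) \<Rightarrow> bool" where
  "bmdp Act p c \<longleftrightarrow> (\<forall>q. Act q \<noteq> {}) \<and>
     (\<forall>q. \<forall>a\<in>Act q. finite (set_pmf (p q a)) \<and> c q a > 0)"

text \<open>Histories of the induced MDP on lists: the past states together with the
  action (i,a) taken in each (i is a 0-based position).\<close>

type_synonym ('q,'a) hist = "('q list \<times> (nat \<times> 'a)) list"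

definition valid_strategy :: "('q \<Rightarrow> 'a set)
     \<Rightarrow> (('q,'a) hist \<Rightarrow> 'q list \<Rightarrow> (nat \<times> 'a) pmf) \<Rightarrow> bool" where
  "valid_strategy Act \<sigma> \<longleftrightarrow> (\<forall>h \<alpha>. \<alpha> \<noteq> [] \<longrightarrow>
      set_pmf (\<sigma> h \<alpha>) \<subseteq> {(i,a). i < length \<alpha> \<and> a \<in> Act (\<alpha> ! i)})"

primrec ecost :: "('q \<Rightarrow> 'a \<Rightarrow> 'q list pmf) \<Rightarrow> ('q \<Rightarrow> 'a \<Rightarrow> real)
     \<Rightarrow> (('q,'a) hist \<Rightarrow> 'q list \<Rightarrow> (nat \<times> 'a) pmf) \<Rightarrow> nat
     \<Rightarrow> ('q,'a) hist \<Rightarrow> 'q list \<Rightarrow> ennreal" where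
  "ecost p c \<sigma> 0 h \<alpha> = 0"
| "ecost p c \<sigma> (Suc n) h \<alpha> =
     (if \<alpha> = [] then 0 else
      \<integral>\<^sup>+ ia. (case ia of (i, a) \<Rightarrow>
          ennreal (c (\<alpha> ! i) a) +
          \<integral>\<^sup>+ \<beta>. ecost p c \<sigma> n (h @ [(\<alpha>, (i, a))]) (take i \<alpha> @ \<beta> @ drop (Suc i) \<alpha>)
             \<partial>measure_pmf (p (\<alpha> ! i) a))
        \<partial>measure_pmf (\<sigma> h \<alpha>))"

definition total_cost :: "('q \<Rightarrow> 'a \<Rightarrow> 'q list pmf) \<Rightarrow> ('q \<Rightarrow> 'a \<Rightarrow> real)
     \<Rightarrow> (('q,'a) hist \<Rightarrow> 'q list \<Rightarrow> (nat \<times> 'a) pmf) \<Rightarrow> 'q list \<Rightarrow> ennreal" where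
  "total_cost p c \<sigma> \<alpha> = (SUP n. ecost p c \<sigma> n [] \<alpha>)"

definition cstar :: "('q \<Rightarrow> 'a set) \<Rightarrow> ('q \<Rightarrow> 'a \<Rightarrow> 'q list pmf) \<Rightarrow> ('q \<Rightarrow> 'a \<Rightarrow> real)
     \<Rightarrow> 'q \<Rightarrow> ennreal" where
  "cstar Act p c q = (INF \<sigma> \<in> {\<sigma>. valid_strategy Act \<sigma>}. total_cost p c \<sigma> [q])"

definition Qstar :: "('q \<Rightarrow> 'a set) \<Rightarrow> ('q \<Rightarrow> 'a \<Rightarrow> 'q list pmf) \<Rightarrow> ('q \<Rightarrow> 'a \<Rightarrow> real)
     \<Rightarrow> 'q \<Rightarrow> 'a \<Rightarrow> ennreal" where
  "Qstar Act p c q a = ennreal (c q a) +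
     (\<integral>\<^sup>+ \<alpha>. (\<Sum>j<length \<alpha>. cstar Act p c (\<alpha> ! j)) \<partial>measure_pmf (p q a))"

text \<open>One step's randomness: a pair (q,a) drawn from sel, then a list drawn from p q a.
  The whole run is driven by an i.i.d. stream of such draws.\<close>

definition step_dist :: "('q \<Rightarrow> 'a \<Rightarrow> 'q list pmf) \<Rightarrow> ('q \<times> 'a) pmf
     \<Rightarrow> (('q \<times> 'a) \<times> 'q list) pmf" where
  "step_dist p sel = bind_pmf sel (\<lambda>qa. map_pmf (\<lambda>\<beta>. (qa, \<beta>)) (p (fst qa) (snd qa)))"

primrec qlearn :: "('q \<Rightarrow> 'a set) \<Rightarrow> ('q \<Rightarrow> 'a \<Rightarrow> real) \<Rightarrow> (nat \<Rightarrow> real)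
     \<Rightarrow> ('q \<times> 'a \<Rightarrow> real) \<Rightarrow> (('q \<times> 'a) \<times> 'q list) stream \<Rightarrow> nat \<Rightarrow> ('q \<times> 'a \<Rightarrow> real)" where
  "qlearn Act c lr Q0 \<omega> 0 = Q0"
| "qlearn Act c lr Q0 \<omega> (Suc i) =
     (let Q = qlearn Act c lr Q0 \<omega> i; qa = fst (\<omega> !! i); \<beta> = snd (\<omega> !! i) in
      Q(qa := (1 - lr i) * Q qa +
               lr i * (c (fst qa) (snd qa) + (\<Sum>j<length \<beta>. Min ((\<lambda>a'. Q (\<beta> ! j, a')) ` Act (\<beta> ! j))))))"

end

theory Submission
  imports Defs
begin

primrec ET :: "('q \<Rightarrow> 'a \<Rightarrow> 'q list pmf) \<Rightarrow> (('q,'a) hist \<Rightarrow> 'q list \<Rightarrow> (nat \<times> 'a) pmf)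
   \<Rightarrow> (('q,'a) hist \<Rightarrow> 'q list \<Rightarrow> ennreal) \<Rightarrow> nat \<Rightarrow> ('q,'a) hist \<Rightarrow> 'q list \<Rightarrow> ennreal" where
  "ET p \<sigma> f 0 h \<alpha> = f h \<alpha>"
| "ET p \<sigma> f (Suc n) h \<alpha> = (if \<alpha> = [] then f h \<alpha> else
     \<integral>\<^sup>+ ia. (case ia of (i, a) \<Rightarrow>
          \<integral>\<^sup>+ \<beta>. ET p \<sigma> f n (h @ [(\<alpha>, (i, a))]) (take i \<alpha> @ \<beta> @ drop (Suc i) \<alpha>)
             \<partial>measure_pmf (p (\<alpha> ! i) a))
        \<partial>measure_pmf (\<sigma> h \<alpha>))"

lemma ET_mono: "(\<And>h \<alpha>. f h \<alpha> \<le> g h \<alpha>) \<Longrightarrow> ET p \<sigma> f n h \<alpha> \<le> ET p \<sigma> g n h \<alpha>"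
proof (induction n arbitrary: h \<alpha>)
  case (Suc n)
  then show ?case
    by (auto intro!: nn_integral_mono split: prod.splits)
qed simp

lemma ET_cmult: "ET p \<sigma> (\<lambda>h \<alpha>. k * f h \<alpha>) n h \<alpha> = k * ET p \<sigma> f n h \<alpha>"
proof (induction n arbitrary: h \<alpha>)
  case (Suc n)
  then show ?case
    by (auto simp: nn_integral_cmult[symmetric] intro!: nn_integral_cong split: prod.splits)
qed simp

lemma ET_SUP:
  assumes mono: "\<And>h \<alpha>. incseq (\<lambda>m. F m h \<alpha>)"
  shows "ET p \<sigma> (\<lambda>h \<alpha>. SUP m. F m h \<alpha>) n h \<alpha> = (SUP m. ET p \<sigma> (F m) n h \<alpha>)"
proof (induction n arbitrary: h \<alpha>)
  case (Suc n)
  have mono2: "\<And>h \<alpha>. incseq (\<lambda>m. ET p \<sigma> (F m) n h \<alpha>)"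
    using mono by (auto simp: incseq_def intro!: ET_mono)
  show ?case
  proof (cases "\<alpha> = []")
    case True then show ?thesis by simp
  next
    case False
    have "ET p \<sigma> (\<lambda>h \<alpha>. SUP m. F m h \<alpha>) (Suc n) h \<alpha> =
      \<integral>\<^sup>+ ia. (case ia of (i, a) \<Rightarrow>
          \<integral>\<^sup>+ \<beta>. (SUP m. ET p \<sigma> (F m) n (h @ [(\<alpha>, (i, a))]) (take i \<alpha> @ \<beta> @ drop (Suc i) \<alpha>))
             \<partial>measure_pmf (p (\<alpha> ! i) a)) \<partial>measure_pmf (\<sigma> h \<alpha>)"
      using False by (simp add: Suc.IH)
    also have "\<dots> = \<integral>\<^sup>+ ia. (SUP m. case ia of (i, a) \<Rightarrow>
          \<integral>\<^sup>+ \<beta>. (ET p \<sigma> (F m) n (h @ [(\<alpha>, (i, a))]) (take i \<alpha> @ \<beta> @ drop (Suc i) \<alpha>))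
             \<partial>measure_pmf (p (\<alpha> ! i) a)) \<partial>measure_pmf (\<sigma> h \<alpha>)"
      apply (intro nn_integral_cong)
      apply (auto split: prod.splits)
      apply (subst nn_integral_monotone_convergence_SUP)
        apply (auto simp: incseq_def le_fun_def intro: mono2[THEN incseqD])
      done
    also have "\<dots> = (SUP m. \<integral>\<^sup>+ ia. (case ia of (i, a) \<Rightarrow>
          \<integral>\<^sup>+ \<beta>. (ET p \<sigma> (F m) n (h @ [(\<alpha>, (i, a))]) (take i \<alpha> @ \<beta> @ drop (Suc i) \<alpha>))
             \<partial>measure_pmf (p (\<alpha> ! i) a)) \<partial>measure_pmf (\<sigma> h \<alpha>))"
      apply (subst nn_integral_monotone_convergence_SUP)
        apply (auto simp: incseq_def le_fun_def split: prod.splits intro!: nn_integral_mono intro: mono2[THEN incseqD])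
      done
    finally show ?thesis using False by simp
  qed
qed simp

lemma ecost_split:
  "ecost p c \<sigma> (n+m) h \<alpha> = ecost p c \<sigma> n h \<alpha> + ET p \<sigma> (\<lambda>h \<alpha>. ecost p c \<sigma> m h \<alpha>) n h \<alpha>"
proof (induction n arbitrary: h \<alpha>)
  case (Suc n)
  show ?case
  proof (cases "\<alpha> = []")
    case True then show ?thesis by (cases m) simp_all
  next
    case False
    have "ecost p c \<sigma> (Suc n + m) h \<alpha> =
      \<integral>\<^sup>+ ia. (case ia of (i, a) \<Rightarrow> (ennreal (c (\<alpha> ! i) a) +
          \<integral>\<^sup>+ \<beta>. ecost p c \<sigma> n (h @ [(\<alpha>, (i, a))]) (take i \<alpha> @ \<beta> @ drop (Suc i) \<alpha>) \<partial>measure_pmf (p (\<alpha> ! i) a))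
          + \<integral>\<^sup>+ \<beta>. ET p \<sigma> (\<lambda>h \<alpha>. ecost p c \<sigma> m h \<alpha>) n (h @ [(\<alpha>, (i, a))]) (take i \<alpha> @ \<beta> @ drop (Suc i) \<alpha>) \<partial>measure_pmf (p (\<alpha> ! i) a))
        \<partial>measure_pmf (\<sigma> h \<alpha>)"
      using False by (auto simp: Suc.IH nn_integral_add add.assoc intro!: nn_integral_cong split: prod.splits)
    also have "\<dots> = ecost p c \<sigma> (Suc n) h \<alpha> + ET p \<sigma> (\<lambda>h \<alpha>. ecost p c \<sigma> m h \<alpha>) (Suc n) h \<alpha>"
    proof -
      let ?A = "\<lambda>ia. (case ia of (i, a) \<Rightarrow> (ennreal (c (\<alpha> ! i) a) +
          \<integral>\<^sup>+ \<beta>. ecost p c \<sigma> n (h @ [(\<alpha>, (i, a))]) (take i \<alpha> @ \<beta> @ drop (Suc i) \<alpha>) \<partial>measure_pmf (p (\<alpha> ! i) a)))"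
      let ?B = "\<lambda>ia. (case ia of (i, a) \<Rightarrow> \<integral>\<^sup>+ \<beta>. ET p \<sigma> (\<lambda>h \<alpha>. ecost p c \<sigma> m h \<alpha>) n (h @ [(\<alpha>, (i, a))]) (take i \<alpha> @ \<beta> @ drop (Suc i) \<alpha>) \<partial>measure_pmf (p (\<alpha> ! i) a))"
      have "\<integral>\<^sup>+ ia. (case ia of (i, a) \<Rightarrow> (ennreal (c (\<alpha> ! i) a) +
          \<integral>\<^sup>+ \<beta>. ecost p c \<sigma> n (h @ [(\<alpha>, (i, a))]) (take i \<alpha> @ \<beta> @ drop (Suc i) \<alpha>) \<partial>measure_pmf (p (\<alpha> ! i) a))
          + \<integral>\<^sup>+ \<beta>. ET p \<sigma> (\<lambda>h \<alpha>. ecost p c \<sigma> m h \<alpha>) n (h @ [(\<alpha>, (i, a))]) (take i \<alpha> @ \<beta> @ drop (Suc i) \<alpha>) \<partial>measure_pmf (p (\<alpha> ! i) a))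
        \<partial>measure_pmf (\<sigma> h \<alpha>) = \<integral>\<^sup>+ ia. ?A ia + ?B ia \<partial>measure_pmf (\<sigma> h \<alpha>)"
        by (intro nn_integral_cong) (auto split: prod.splits)
      also have "\<dots> = (\<integral>\<^sup>+ ia. ?A ia \<partial>measure_pmf (\<sigma> h \<alpha>)) + (\<integral>\<^sup>+ ia. ?B ia \<partial>measure_pmf (\<sigma> h \<alpha>))"
        by (rule nn_integral_add) auto
      finally show ?thesis using False by simp
    qed
    finally show ?thesis .
  qed
qed simp

lemma ecost_ge_len:
  assumes val: "valid_strategy Act \<sigma>" and cm: "\<And>q a. a \<in> Act q \<Longrightarrow> cmin \<le> c q a" and "0 \<le> cmin"
  shows "ennreal cmin * of_nat (min m (length \<alpha>)) \<le> ecost p c \<sigma> m h \<alpha>"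
proof (induction m arbitrary: h \<alpha>)
  case (Suc m)
  show ?case
  proof (cases "\<alpha> = []")
    case True then show ?thesis by simp
  next
    case False
    have "ennreal cmin * of_nat (min (Suc m) (length \<alpha>)) = \<integral>\<^sup>+ ia. ennreal cmin * of_nat (min (Suc m) (length \<alpha>)) \<partial>measure_pmf (\<sigma> h \<alpha>)"
      by simp
    also have "\<dots> \<le> \<integral>\<^sup>+ ia. (case ia of (i, a) \<Rightarrow>
          ennreal (c (\<alpha> ! i) a) +
          \<integral>\<^sup>+ \<beta>. ecost p c \<sigma> m (h @ [(\<alpha>, (i, a))]) (take i \<alpha> @ \<beta> @ drop (Suc i) \<alpha>)
             \<partial>measure_pmf (p (\<alpha> ! i) a)) \<partial>measure_pmf (\<sigma> h \<alpha>)"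
    proof (intro nn_integral_mono_AE, unfold AE_measure_pmf_iff, intro ballI)
      fix ia assume ia: "ia \<in> set_pmf (\<sigma> h \<alpha>)"
      obtain i a where iad: "ia = (i,a)" by (cases ia)
      have ia2: "i < length \<alpha>" "a \<in> Act (\<alpha> ! i)"
        using val False ia iad unfolding valid_strategy_def by auto
      have "ennreal cmin * of_nat (min (Suc m) (length \<alpha>)) = ennreal cmin + ennreal cmin * of_nat (min m (length \<alpha> - 1))"
        using False by (cases "length \<alpha>") (auto simp: distrib_left min_def)
      also have "\<dots> \<le> ennreal (c (\<alpha> ! i) a) + \<integral>\<^sup>+ \<beta>. ennreal cmin * of_nat (min m (length \<alpha> - 1)) \<partial>measure_pmf (p (\<alpha> ! i) a)"
        using cm[OF ia2(2)] by (auto intro!: add_mono ennreal_leI)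
      also have "\<dots> \<le> ennreal (c (\<alpha> ! i) a) + \<integral>\<^sup>+ \<beta>. ecost p c \<sigma> m (h @ [(\<alpha>, (i, a))]) (take i \<alpha> @ \<beta> @ drop (Suc i) \<alpha>) \<partial>measure_pmf (p (\<alpha> ! i) a)"
      proof (intro add_mono order_refl nn_integral_mono)
        fix \<beta>
        have "ennreal cmin * of_nat (min m (length \<alpha> - 1)) \<le> ennreal cmin * of_nat (min m (length (take i \<alpha> @ \<beta> @ drop (Suc i) \<alpha>)))"
          using ia2 by (intro mult_left_mono) auto
        also have "\<dots> \<le> ecost p c \<sigma> m (h @ [(\<alpha>, (i, a))]) (take i \<alpha> @ \<beta> @ drop (Suc i) \<alpha>)" by (rule Suc.IH)
        finally show "ennreal cmin * of_nat (min m (length \<alpha> - 1)) \<le> ecost p c \<sigma> m (h @ [(\<alpha>, (i, a))]) (take i \<alpha> @ \<beta> @ drop (Suc i) \<alpha>)" .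
      qed
      finally show "ennreal cmin * of_nat (min (Suc m) (length \<alpha>)) \<le> (case ia of (i, a) \<Rightarrow> ennreal (c (\<alpha> ! i) a) +
          \<integral>\<^sup>+ \<beta>. ecost p c \<sigma> m (h @ [(\<alpha>, (i, a))]) (take i \<alpha> @ \<beta> @ drop (Suc i) \<alpha>) \<partial>measure_pmf (p (\<alpha> ! i) a))"
        using iad by simp
    qed
    also have "\<dots> = ecost p c \<sigma> (Suc m) h \<alpha>" using False by simp
    finally show ?thesis .
  qed
qed simp

definition Phi :: "('q \<Rightarrow> real) \<Rightarrow> 'q list \<Rightarrow> ennreal" where
  "Phi g xs = sum_list (map (\<lambda>q. ennreal (g q)) xs)"

lemma Phi_append[simp]: "Phi g (xs @ ys) = Phi g xs + Phi g ys"
  by (simp add: Phi_def)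

lemma Phi_le_len: "(\<And>q. g q \<le> B) \<Longrightarrow> Phi g xs \<le> ennreal B * of_nat (length xs)"
proof (induction xs)
  case (Cons x xs)
  have "Phi g (x # xs) = ennreal (g x) + Phi g xs" by (simp add: Phi_def)
  also have "\<dots> \<le> ennreal B + ennreal B * of_nat (length xs)"
    using Cons by (intro add_mono ennreal_leI) auto
  finally show ?case by (simp add: distrib_left add.commute)
qed (simp add: Phi_def)

lemma potential:
  assumes val: "valid_strategy Act \<sigma>"
    and hyp: "\<And>q a. a \<in> Act q \<Longrightarrow> ennreal (g q) \<le> ennreal (c q a) + (\<integral>\<^sup>+\<beta>. Phi g \<beta> \<partial>measure_pmf (p q a))"
    and gB: "\<And>q. g q \<le> B"
  shows "Phi g \<alpha> \<le> ecost p c \<sigma> n h \<alpha> + ET p \<sigma> (\<lambda>h \<alpha>. ennreal B * of_nat (length \<alpha>)) n h \<alpha>"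
proof (induction n arbitrary: h \<alpha>)
  case 0
  then show ?case using Phi_le_len[OF gB] by simp
next
  case (Suc n)
  let ?ET = "ET p \<sigma> (\<lambda>h \<alpha>. ennreal B * of_nat (length \<alpha>))"
  show ?case
  proof (cases "\<alpha> = []")
    case True then show ?thesis by (simp add: Phi_def)
  next
    case False
    let ?A = "\<lambda>ia. (case ia of (i, a) \<Rightarrow> (ennreal (c (\<alpha> ! i) a) +
          \<integral>\<^sup>+ \<beta>. ecost p c \<sigma> n (h @ [(\<alpha>, (i, a))]) (take i \<alpha> @ \<beta> @ drop (Suc i) \<alpha>) \<partial>measure_pmf (p (\<alpha> ! i) a)))"
    let ?B = "\<lambda>ia. (case ia of (i, a) \<Rightarrow> \<integral>\<^sup>+ \<beta>. ?ET n (h @ [(\<alpha>, (i, a))]) (take i \<alpha> @ \<beta> @ drop (Suc i) \<alpha>) \<partial>measure_pmf (p (\<alpha> ! i) a))"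
    have "Phi g \<alpha> = \<integral>\<^sup>+ ia. Phi g \<alpha> \<partial>measure_pmf (\<sigma> h \<alpha>)" by simp
    also have "\<dots> \<le> \<integral>\<^sup>+ ia. ?A ia + ?B ia \<partial>measure_pmf (\<sigma> h \<alpha>)"
    proof (intro nn_integral_mono_AE, unfold AE_measure_pmf_iff, intro ballI)
      fix ia assume ia: "ia \<in> set_pmf (\<sigma> h \<alpha>)"
      obtain i a where iad: "ia = (i,a)" by (cases ia)
      have ia2: "i < length \<alpha>" "a \<in> Act (\<alpha> ! i)"
        using val False ia iad unfolding valid_strategy_def by auto
      have "Phi g \<alpha> = Phi g (take i \<alpha>) + ennreal (g (\<alpha> ! i)) + Phi g (drop (Suc i) \<alpha>)"
        using id_take_nth_drop[OF ia2(1)] by (metis Phi_append Phi_def add.assoc append_Cons list.simps(9) self_append_conv2 sum_list_simps(2))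
      also have "\<dots> \<le> Phi g (take i \<alpha>) + (ennreal (c (\<alpha> ! i) a) + (\<integral>\<^sup>+\<beta>. Phi g \<beta> \<partial>measure_pmf (p (\<alpha> ! i) a))) + Phi g (drop (Suc i) \<alpha>)"
        using hyp[OF ia2(2)] by (intro add_mono order_refl)
      also have "\<dots> = ennreal (c (\<alpha> ! i) a) + (\<integral>\<^sup>+\<beta>. Phi g (take i \<alpha> @ \<beta> @ drop (Suc i) \<alpha>) \<partial>measure_pmf (p (\<alpha> ! i) a))"
      proof -
        have "(\<integral>\<^sup>+\<beta>. Phi g (take i \<alpha> @ \<beta> @ drop (Suc i) \<alpha>) \<partial>measure_pmf (p (\<alpha> ! i) a))
           = (\<integral>\<^sup>+\<beta>. Phi g (take i \<alpha>) + (Phi g \<beta> + Phi g (drop (Suc i) \<alpha>)) \<partial>measure_pmf (p (\<alpha> ! i) a))" by simp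
        also have "\<dots> = Phi g (take i \<alpha>) + ((\<integral>\<^sup>+\<beta>. Phi g \<beta> \<partial>measure_pmf (p (\<alpha> ! i) a)) + Phi g (drop (Suc i) \<alpha>))"
          by (simp add: nn_integral_add)
        finally show ?thesis by (simp add: algebra_simps)
      qed
      also have "\<dots> \<le> ennreal (c (\<alpha> ! i) a) + (\<integral>\<^sup>+\<beta>. ecost p c \<sigma> n (h @ [(\<alpha>, (i, a))]) (take i \<alpha> @ \<beta> @ drop (Suc i) \<alpha>)
            + ?ET n (h @ [(\<alpha>, (i, a))]) (take i \<alpha> @ \<beta> @ drop (Suc i) \<alpha>) \<partial>measure_pmf (p (\<alpha> ! i) a))"
        by (intro add_mono order_refl nn_integral_mono Suc.IH)
      also have "\<dots> = ?A ia + ?B ia"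
        using iad by (simp add: nn_integral_add add.assoc)
      finally show "Phi g \<alpha> \<le> ?A ia + ?B ia" .
    qed
    also have "\<dots> = (\<integral>\<^sup>+ ia. ?A ia \<partial>measure_pmf (\<sigma> h \<alpha>)) + (\<integral>\<^sup>+ ia. ?B ia \<partial>measure_pmf (\<sigma> h \<alpha>))"
      by (rule nn_integral_add) auto
    also have "\<dots> = ecost p c \<sigma> (Suc n) h \<alpha> + ?ET (Suc n) h \<alpha>"
      using False by simp
    finally show ?thesis .
  qed
qed

lemma SUP_min_nat: "(SUP m. (of_nat (min m k) :: ennreal)) = of_nat k"
proof (rule antisym)
  show "(SUP m. (of_nat (min m k) :: ennreal)) \<le> of_nat k" by (intro SUP_least) auto
  show "of_nat k \<le> (SUP m. (of_nat (min m k) :: ennreal))"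
    by (rule SUP_upper2[of k]) auto
qed

lemma cost_bound:
  assumes val: "valid_strategy Act \<sigma>" and cm: "\<And>q a. a \<in> Act q \<Longrightarrow> cmin \<le> c q a" and "0 \<le> cmin"
  shows "ecost p c \<sigma> n h \<alpha> + ennreal cmin * ET p \<sigma> (\<lambda>h \<alpha>. of_nat (length \<alpha>)) n h \<alpha> \<le> (SUP n. ecost p c \<sigma> n h \<alpha>)"
proof -
  have "ET p \<sigma> (\<lambda>h \<alpha>. of_nat (length \<alpha>)) n h \<alpha> = ET p \<sigma> (\<lambda>h \<alpha>. SUP m. of_nat (min m (length \<alpha>))) n h \<alpha>"
    by (simp add: SUP_min_nat)
  also have "\<dots> = (SUP m. ET p \<sigma> (\<lambda>h \<alpha>. of_nat (min m (length \<alpha>))) n h \<alpha>)"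
    by (rule ET_SUP) (auto simp: incseq_def)
  finally have eq: "ET p \<sigma> (\<lambda>h \<alpha>. of_nat (length \<alpha>)) n h \<alpha> = (SUP m. ET p \<sigma> (\<lambda>h \<alpha>. of_nat (min m (length \<alpha>))) n h \<alpha>)" .
  have "ecost p c \<sigma> n h \<alpha> + ennreal cmin * ET p \<sigma> (\<lambda>h \<alpha>. of_nat (length \<alpha>)) n h \<alpha>
     = (SUP m. ecost p c \<sigma> n h \<alpha> + ennreal cmin * ET p \<sigma> (\<lambda>h \<alpha>. of_nat (min m (length \<alpha>))) n h \<alpha>)"
    unfolding eq SUP_mult_left_ennreal by (simp add: ennreal_SUP_add_right)
  also have "\<dots> \<le> (SUP n. ecost p c \<sigma> n h \<alpha>)"
  proof (intro SUP_least)
    fix m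
    have "ennreal cmin * ET p \<sigma> (\<lambda>h \<alpha>. of_nat (min m (length \<alpha>))) n h \<alpha>
        = ET p \<sigma> (\<lambda>h \<alpha>. ennreal cmin * of_nat (min m (length \<alpha>))) n h \<alpha>"
      by (simp add: ET_cmult)
    also have "\<dots> \<le> ET p \<sigma> (\<lambda>h \<alpha>. ecost p c \<sigma> m h \<alpha>) n h \<alpha>"
      by (intro ET_mono ecost_ge_len[OF val cm \<open>0 \<le> cmin\<close>])
    finally have "ecost p c \<sigma> n h \<alpha> + ennreal cmin * ET p \<sigma> (\<lambda>h \<alpha>. of_nat (min m (length \<alpha>))) n h \<alpha>
        \<le> ecost p c \<sigma> (n+m) h \<alpha>" unfolding ecost_split by (intro add_mono order_refl)
    also have "\<dots> \<le> (SUP n. ecost p c \<sigma> n h \<alpha>)" by (rule SUP_upper) auto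
    finally show "ecost p c \<sigma> n h \<alpha> + ennreal cmin * ET p \<sigma> (\<lambda>h \<alpha>. of_nat (min m (length \<alpha>))) n h \<alpha>
        \<le> (SUP n. ecost p c \<sigma> n h \<alpha>)" .
  qed
  finally show ?thesis .
qed

lemma total_ge:
  assumes val: "valid_strategy Act \<sigma>" and cm: "\<And>q a. a \<in> Act q \<Longrightarrow> cmin \<le> c q a" and cpos: "0 < cmin"
    and hyp: "\<And>q a. a \<in> Act q \<Longrightarrow> ennreal (g q) \<le> ennreal (c q a) + (\<integral>\<^sup>+\<beta>. Phi g \<beta> \<partial>measure_pmf (p q a))"
    and gB: "\<And>q. g q \<le> B" and B0: "0 \<le> B" and g0: "\<And>q. 0 \<le> g q"
  shows "ennreal (g q) \<le> total_cost p c \<sigma> [q]"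
proof -
  define e where "e n = ecost p c \<sigma> n [] [q]" for n
  define L where "L n = ET p \<sigma> (\<lambda>h \<alpha>. of_nat (length \<alpha>)) n [] [q]" for n
  define T where "T = total_cost p c \<sigma> [q]"
  have T: "T = (SUP n. e n)" unfolding T_def total_cost_def e_def ..
  have F1: "ennreal (g q) \<le> e n + ennreal B * L n" for n
    using potential[OF val hyp gB, where \<alpha>="[q]" and n=n and h="[]"] unfolding e_def L_def
    by (simp add: Phi_def ET_cmult)
  have F2: "e n + ennreal cmin * L n \<le> T" for n
    using cost_bound[OF val cm, where n=n and h="[]" and \<alpha>="[q]"] cpos unfolding e_def L_def T by simp
  show ?thesis
  proof (cases "T = \<top>")
    case True then show ?thesis unfolding T_def by simp
  next
    case False
    define t where "t = enn2real T"
    have Tt: "T = ennreal t" using False unfolding t_def by (cases T) auto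
    have t0: "0 \<le> t" unfolding t_def by simp
    have "g q \<le> t + \<epsilon>" if eps: "\<epsilon> > 0" for \<epsilon>
    proof -
      define \<delta> where "\<delta> = \<epsilon> * cmin / (B + 1)"
      have dpos: "\<delta> > 0" unfolding \<delta>_def using eps cpos B0 by auto
      obtain n where n: "T < e n + ennreal \<delta>"
      proof (rule ccontr)
        assume "\<not> thesis"
        then have "\<forall>n. e n + ennreal \<delta> \<le> T" using that by (meson not_less)
        then have "(SUP n. e n) + ennreal \<delta> \<le> T"
          by (simp add: ennreal_SUP_add_left[symmetric] SUP_least)
        then have "ennreal t + ennreal \<delta> \<le> ennreal t" using T Tt by simp
        then show False using dpos by (simp add: ennreal_plus[symmetric] del: ennreal_plus)
      qed
      have en: "e n \<le> T" using F2[of n] by (metis le_iff_add order_trans)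
      have "e n \<noteq> \<top>" using en False by (auto simp: top_unique)
      then obtain er where er: "e n = ennreal er" "0 \<le> er" by (cases "e n") auto
      have "ennreal cmin * L n \<le> T" using F2[of n] by (metis add.commute le_iff_add order_trans)
      then have "ennreal cmin * L n \<noteq> \<top>" using False by (auto simp: top_unique)
      then have "L n \<noteq> \<top>" using cpos by (auto simp: ennreal_mult_eq_top_iff)
      then obtain lr where lr: "L n = ennreal lr" "0 \<le> lr" by (cases "L n") auto
      have r1: "g q \<le> er + B * lr"
        using F1[of n] er lr g0[of q] B0 by (simp add: ennreal_mult[symmetric] ennreal_plus[symmetric] del: ennreal_plus)
      have r2: "er + cmin * lr \<le> t"
        using F2[of n] er lr Tt cpos t0 by (simp add: ennreal_mult[symmetric] ennreal_plus[symmetric] ennreal_le_iff del: ennreal_plus)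
      have r3: "t < er + \<delta>"
        using n er Tt dpos t0 by (simp add: ennreal_plus[symmetric] ennreal_less_iff del: ennreal_plus)
      have "cmin * lr < \<delta>" using r2 r3 by linarith
      then have "lr < \<delta> / cmin" using cpos by (simp add: field_simps)
      moreover have "\<delta> / cmin = \<epsilon> / (B + 1)" unfolding \<delta>_def using cpos by simp
      ultimately have "lr < \<epsilon> / (B + 1)" by simp
      then have "B * lr \<le> B * (\<epsilon> / (B + 1))" using B0 by (intro mult_left_mono) auto
      also have "\<dots> \<le> \<epsilon>" using B0 eps by (simp add: field_simps)
      finally have "B * lr \<le> \<epsilon>" .
      then show ?thesis using r1 r2 lr cpos by (smt (verit) mult_nonneg_nonneg)
    qed
    then have "g q \<le> t" by (rule field_le_epsilon)
    then show ?thesis using Tt unfolding T_def by (simp add: ennreal_leI)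
  qed
qed


lemma sl_nonneg: "(\<And>x. 0 \<le> g x) \<Longrightarrow> 0 \<le> sum_list (map g xs)" for g :: "_ \<Rightarrow> real"
  by (induction xs) (auto intro: add_nonneg_nonneg)

lemma sum_list_ennreal: "(\<And>x. 0 \<le> g x) \<Longrightarrow> sum_list (map (\<lambda>q. ennreal (g q)) xs) = ennreal (sum_list (map g xs))"
proof (induction xs)
  case (Cons a xs)
  then show ?case by (simp add: ennreal_plus sl_nonneg)
qed simp

lemma tendsto_sum_list: "(\<And>x. x \<in> set xs \<Longrightarrow> ((\<lambda>k. f k x) \<longlongrightarrow> F x) F') \<Longrightarrow> ((\<lambda>k. sum_list (map (f k) xs)) \<longlongrightarrow> sum_list (map F xs)) F'"
  for f :: "_ \<Rightarrow> _ \<Rightarrow> real"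
  by (induction xs) (auto intro!: tendsto_add)

lemma tendsto_Min_finite:
  fixes f :: "nat \<Rightarrow> 'b \<Rightarrow> real"
  assumes "finite A" "A \<noteq> {}" "\<And>a. a \<in> A \<Longrightarrow> (\<lambda>k. f k a) \<longlonglongrightarrow> F a"
  shows "(\<lambda>k. Min (f k ` A)) \<longlonglongrightarrow> Min (F ` A)"
  using assms
proof (induction A rule: finite_ne_induct)
  case (singleton x) then show ?case by simp
next
  case (insert x A)
  have "(\<lambda>k. min (f k x) (Min (f k ` A))) \<longlonglongrightarrow> min (F x) (Min (F ` A))"
    using insert by (intro tendsto_min) auto
  then show ?case using insert by (simp add: Min_insert)
qed

locale bm =
  fixes Act :: "'q::finite \<Rightarrow> 'a::finite set" and p :: "'q \<Rightarrow> 'a \<Rightarrow> 'q list pmf" and c :: "'q \<Rightarrow> 'a \<Rightarrow> real"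
  assumes bm: "bmdp Act p c"
    and Qfin: "\<forall>q. \<forall>a\<in>Act q. Qstar Act p c q a < \<infinity>"
begin

lemma Act_ne: "Act q \<noteq> {}" using bm unfolding bmdp_def by auto
lemma fin_supp: "a \<in> Act q \<Longrightarrow> finite (set_pmf (p q a))" using bm unfolding bmdp_def by auto
lemma cpos: "a \<in> Act q \<Longrightarrow> c q a > 0" using bm unfolding bmdp_def by auto

definition Ex :: "'q \<Rightarrow> 'a \<Rightarrow> ('q list \<Rightarrow> real) \<Rightarrow> real" where
  "Ex q a f = (\<Sum>\<beta>\<in>set_pmf (p q a). pmf (p q a) \<beta> * f \<beta>)"

lemma Ex_nn: "a \<in> Act q \<Longrightarrow> (\<And>\<beta>. \<beta> \<in> set_pmf (p q a) \<Longrightarrow> 0 \<le> f \<beta>) \<Longrightarrow>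
    (\<integral>\<^sup>+\<beta>. ennreal (f \<beta>) \<partial>measure_pmf (p q a)) = ennreal (Ex q a f)"
  unfolding Ex_def
  by (subst nn_integral_measure_pmf_finite[OF fin_supp])
     (auto simp: ennreal_mult[symmetric] mult.commute intro!: sum_ennreal sum.cong)

lemma Ex_mono: "(\<And>\<beta>. \<beta> \<in> set_pmf (p q a) \<Longrightarrow> f \<beta> \<le> g \<beta>) \<Longrightarrow> Ex q a f \<le> Ex q a g"
  unfolding Ex_def by (intro sum_mono mult_left_mono) auto

lemma Ex_nonneg: "(\<And>\<beta>. \<beta> \<in> set_pmf (p q a) \<Longrightarrow> 0 \<le> f \<beta>) \<Longrightarrow> 0 \<le> Ex q a f"
  unfolding Ex_def by (intro sum_nonneg mult_nonneg_nonneg) auto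

lemma Ex_const: "a \<in> Act q \<Longrightarrow> Ex q a (\<lambda>_. k) = k"
  unfolding Ex_def using sum_pmf_eq_1[OF fin_supp, of a q "p q a"]
  by (simp add: sum_distrib_right[symmetric])

lemma Ex_add: "Ex q a (\<lambda>\<beta>. f \<beta> + g \<beta>) = Ex q a f + Ex q a g"
  unfolding Ex_def by (simp add: distrib_left sum.distrib)

lemma Ex_cmult: "Ex q a (\<lambda>\<beta>. k * f \<beta>) = k * Ex q a f"
  unfolding Ex_def by (simp add: sum_distrib_left algebra_simps)

lemma Ex_diff: "Ex q a (\<lambda>\<beta>. f \<beta> - g \<beta>) = Ex q a f - Ex q a g"
  unfolding Ex_def by (simp add: right_diff_distrib sum_subtractf)

lemma tendsto_Ex: "(\<And>\<beta>. ((\<lambda>k. f k \<beta>) \<longlongrightarrow> F \<beta>) F') \<Longrightarrow> ((\<lambda>k. Ex q a (f k)) \<longlongrightarrow> Ex q a F) F'"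
  unfolding Ex_def by (intro tendsto_sum tendsto_mult tendsto_const) auto

definition Bell :: "('q \<Rightarrow> real) \<Rightarrow> 'q \<Rightarrow> real" where
  "Bell g q = Min ((\<lambda>a. c q a + Ex q a (\<lambda>\<beta>. sum_list (map g \<beta>))) ` Act q)"

lemma Bell_le: "a \<in> Act q \<Longrightarrow> Bell g q \<le> c q a + Ex q a (\<lambda>\<beta>. sum_list (map g \<beta>))"
  unfolding Bell_def by (rule Min_le) auto

lemma Bell_ex: "\<exists>a\<in>Act q. Bell g q = c q a + Ex q a (\<lambda>\<beta>. sum_list (map g \<beta>))"
proof -
  have "Bell g q \<in> (\<lambda>a. c q a + Ex q a (\<lambda>\<beta>. sum_list (map g \<beta>))) ` Act q"
    unfolding Bell_def using Act_ne by (intro Min_in) auto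
  then show ?thesis by auto
qed

lemma Bell_mono: "(\<And>q. g q \<le> g' q) \<Longrightarrow> Bell g q \<le> Bell g' q"
proof -
  assume le: "\<And>q. g q \<le> g' q"
  obtain a where a: "a \<in> Act q" "Bell g' q = c q a + Ex q a (\<lambda>\<beta>. sum_list (map g' \<beta>))"
    using Bell_ex by blast
  have "Bell g q \<le> c q a + Ex q a (\<lambda>\<beta>. sum_list (map g \<beta>))" by (rule Bell_le[OF a(1)])
  also have "\<dots> \<le> c q a + Ex q a (\<lambda>\<beta>. sum_list (map g' \<beta>))"
    using le by (intro add_mono order_refl Ex_mono sum_list_mono) auto
  finally show ?thesis using a by simp
qed

lemma Bell_nonneg: "(\<And>q. 0 \<le> g q) \<Longrightarrow> 0 \<le> Bell g q"
proof -
  assume g0: "\<And>q. 0 \<le> g q"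
  obtain a where a: "a \<in> Act q" "Bell g q = c q a + Ex q a (\<lambda>\<beta>. sum_list (map g \<beta>))"
    using Bell_ex by blast
  have "0 \<le> Ex q a (\<lambda>\<beta>. sum_list (map g \<beta>))" using g0 by (intro Ex_nonneg sl_nonneg)
  then show ?thesis using cpos[OF a(1)] a(2) by simp
qed

primrec vi :: "nat \<Rightarrow> 'q \<Rightarrow> real" where
  "vi 0 = (\<lambda>q. 0)"
| "vi (Suc k) = Bell (vi k)"

lemma vi_nonneg: "0 \<le> vi k q"
  by (induction k arbitrary: q) (auto intro: Bell_nonneg)

lemma vi_mono_Suc: "vi k q \<le> vi (Suc k) q"
proof (induction k arbitrary: q)
  case 0 then show ?case by (simp add: Bell_nonneg)
next
  case (Suc k) then show ?case by (simp add: Bell_mono)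
qed

lemma cmin_ex: "\<exists>cmin>0. \<forall>q. \<forall>a\<in>Act q. cmin \<le> c q a"
proof -
  let ?C = "{c q a | q a. a \<in> Act q}"
  have fin: "finite ?C"
  proof -
    have "?C \<subseteq> (\<lambda>(q,a). c q a) ` UNIV" by auto
    then show ?thesis by (rule finite_subset) simp
  qed
  have ne: "?C \<noteq> {}" using Act_ne by blast
  have "Min ?C > 0" using fin ne cpos by (subst Min_gr_iff) auto
  moreover have "\<forall>q. \<forall>a\<in>Act q. Min ?C \<le> c q a" using fin by (auto intro: Min_le)
  ultimately show ?thesis by blast
qed

lemma cstar_ge:
  assumes g0: "\<And>q. 0 \<le> g q"
    and hyp: "\<And>q a. a \<in> Act q \<Longrightarrow> g q \<le> c q a + Ex q a (\<lambda>\<beta>. sum_list (map g \<beta>))"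
  shows "ennreal (g q) \<le> cstar Act p c q"
proof -
  obtain cmin where cm: "cmin > 0" "\<forall>q. \<forall>a\<in>Act q. cmin \<le> c q a" using cmin_ex by blast
  define B where "B = Max (range g)"
  have gB: "g q \<le> B" for q unfolding B_def by (rule Max_ge) auto
  have B0: "0 \<le> B" using gB[of q] g0[of q] by simp
  have hyp': "ennreal (g q) \<le> ennreal (c q a) + (\<integral>\<^sup>+\<beta>. Phi g \<beta> \<partial>measure_pmf (p q a))" if a: "a \<in> Act q" for q a
  proof -
    have "(\<integral>\<^sup>+\<beta>. Phi g \<beta> \<partial>measure_pmf (p q a)) = (\<integral>\<^sup>+\<beta>. ennreal (sum_list (map g \<beta>)) \<partial>measure_pmf (p q a))"
      unfolding Phi_def using g0 by (simp add: sum_list_ennreal)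
    also have "\<dots> = ennreal (Ex q a (\<lambda>\<beta>. sum_list (map g \<beta>)))"
      using a g0 by (intro Ex_nn) (auto intro: sl_nonneg)
    moreover have "0 \<le> Ex q a (\<lambda>\<beta>. sum_list (map g \<beta>))" using g0 by (intro Ex_nonneg sl_nonneg)
    ultimately show ?thesis using hyp[OF a] cpos[OF a] g0
      by (simp add: ennreal_plus[symmetric] ennreal_leI del: ennreal_plus)
  qed
  show ?thesis unfolding cstar_def
  proof (rule INF_greatest)
    fix \<sigma> assume "\<sigma> \<in> {\<sigma>. valid_strategy Act \<sigma>}"
    then show "ennreal (g q) \<le> total_cost p c \<sigma> [q]"
      using cm by (intro total_ge[where cmin=cmin and B=B] hyp' gB B0 g0) auto
  qed
qed

lemma vi_le_cstar: "ennreal (vi k q) \<le> cstar Act p c q"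
proof (rule cstar_ge)
  show "\<And>q. 0 \<le> vi k q" by (rule vi_nonneg)
  fix q a assume a: "a \<in> Act q"
  have "vi k q \<le> vi (Suc k) q" by (rule vi_mono_Suc)
  also have "\<dots> \<le> c q a + Ex q a (\<lambda>\<beta>. sum_list (map (vi k) \<beta>))" using Bell_le[OF a] by simp
  finally show "vi k q \<le> c q a + Ex q a (\<lambda>\<beta>. sum_list (map (vi k) \<beta>))" .
qed

lemma cstar_sum_list: "(\<Sum>j<length \<beta>. cstar Act p c (\<beta> ! j)) = sum_list (map (cstar Act p c) \<beta>)"
  by (simp add: sum_list_sum_nth atLeast0LessThan)

lemma Qstar_ge:
  assumes a: "a \<in> Act q" and g0: "\<And>q. 0 \<le> g q" and gle: "\<And>q. ennreal (g q) \<le> cstar Act p c q"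
  shows "ennreal (c q a + Ex q a (\<lambda>\<beta>. sum_list (map g \<beta>))) \<le> Qstar Act p c q a"
proof -
  have "ennreal (Ex q a (\<lambda>\<beta>. sum_list (map g \<beta>))) = (\<integral>\<^sup>+\<beta>. ennreal (sum_list (map g \<beta>)) \<partial>measure_pmf (p q a))"
    using a g0 by (intro Ex_nn[symmetric]) (auto intro: sl_nonneg)
  also have "\<dots> = (\<integral>\<^sup>+\<beta>. sum_list (map (\<lambda>q. ennreal (g q)) \<beta>) \<partial>measure_pmf (p q a))"
    using g0 by (simp add: sum_list_ennreal)
  also have "\<dots> \<le> (\<integral>\<^sup>+\<beta>. sum_list (map (cstar Act p c) \<beta>) \<partial>measure_pmf (p q a))"
    using gle by (intro nn_integral_mono sum_list_mono) auto
  moreover have "0 \<le> Ex q a (\<lambda>\<beta>. sum_list (map g \<beta>))" using g0 by (intro Ex_nonneg sl_nonneg)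
  ultimately show ?thesis unfolding Qstar_def cstar_sum_list
    using cpos[OF a] by (simp add: ennreal_plus add_mono)
qed

lemma vi_bounded: "vi k q \<le> enn2real (Qstar Act p c q (SOME a. a \<in> Act q))"
proof (cases k)
  case 0 then show ?thesis by simp
next
  case (Suc k')
  define a where "a = (SOME a. a \<in> Act q)"
  have a: "a \<in> Act q" unfolding a_def using Act_ne by (simp add: some_in_eq)
  have "vi k q \<le> c q a + Ex q a (\<lambda>\<beta>. sum_list (map (vi k') \<beta>))" using Suc Bell_le[OF a] by simp
  moreover have "ennreal (c q a + Ex q a (\<lambda>\<beta>. sum_list (map (vi k') \<beta>))) \<le> Qstar Act p c q a"
    by (intro Qstar_ge a vi_nonneg vi_le_cstar)
  moreover have "Qstar Act p c q a < \<infinity>" using Qfin a by auto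
  ultimately have "enn2real (ennreal (c q a + Ex q a (\<lambda>\<beta>. sum_list (map (vi k') \<beta>)))) \<le> enn2real (Qstar Act p c q a)"
    by (intro enn2real_mono) auto
  moreover have "0 \<le> c q a + Ex q a (\<lambda>\<beta>. sum_list (map (vi k') \<beta>))"
    using \<open>vi k q \<le> _\<close> vi_nonneg[of k q] by linarith
  ultimately show ?thesis unfolding a_def[symmetric] using \<open>vi k q \<le> _\<close> by simp
qed

definition vinf :: "'q \<Rightarrow> real" where "vinf q = (SUP k. vi k q)"

lemma vi_tendsto: "(\<lambda>k. vi k q) \<longlonglongrightarrow> vinf q"
  unfolding vinf_def
  by (rule LIMSEQ_incseq_SUP) (auto intro!: bdd_aboveI[where M="enn2real (Qstar Act p c q (SOME a. a \<in> Act q))"] vi_bounded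
      incseq_SucI vi_mono_Suc simp del: vi.simps)

lemma vinf_nonneg: "0 \<le> vinf q"
  using vi_tendsto[of q] by (rule LIMSEQ_le_const) (auto intro: vi_nonneg)

lemma vinf_fix: "vinf q = Bell vinf q"
proof -
  have "(\<lambda>k. vi (Suc k) q) \<longlonglongrightarrow> vinf q" using vi_tendsto by (rule LIMSEQ_Suc)
  moreover have "(\<lambda>k. vi (Suc k) q) \<longlonglongrightarrow> Bell vinf q"
    unfolding vi.simps Bell_def using Act_ne
    by (intro tendsto_Min_finite tendsto_add tendsto_const tendsto_Ex tendsto_sum_list vi_tendsto) auto
  ultimately show ?thesis by (rule LIMSEQ_unique)
qed

lemma vinf_le_cstar: "ennreal (vinf q) \<le> cstar Act p c q"
proof (cases "cstar Act p c q = \<top>")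
  case True then show ?thesis by simp
next
  case False
  have "vi k q \<le> enn2real (cstar Act p c q)" for k
    using vi_le_cstar[of k q] False vi_nonneg[of k q]
    by (metis enn2real_ennreal enn2real_mono top.not_eq_extremum)
  then have "vinf q \<le> enn2real (cstar Act p c q)"
    using vi_tendsto[of q] by (intro LIMSEQ_le_const2) auto
  then show ?thesis using False by (metis ennreal_enn2real ennreal_leI top.not_eq_extremum)
qed

definition W :: "'q \<times> 'a \<Rightarrow> real" where
  "W s = c (fst s) (snd s) + Ex (fst s) (snd s) (\<lambda>\<beta>. sum_list (map vinf \<beta>))"

definition sig :: "'q \<Rightarrow> 'a" where
  "sig r = (SOME a. a \<in> Act r \<and> W (r, a) = vinf r)"

lemma sig: "sig r \<in> Act r \<and> W (r, sig r) = vinf r"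
proof -
  obtain a where "a \<in> Act r" "Bell vinf r = c r a + Ex r a (\<lambda>\<beta>. sum_list (map vinf \<beta>))"
    using Bell_ex by blast
  then have "\<exists>a. a \<in> Act r \<and> W (r, a) = vinf r" using vinf_fix[of r] unfolding W_def by auto
  then show ?thesis unfolding sig_def by (rule someI_ex)
qed

lemma sig_Act: "sig r \<in> Act r" using sig by blast
lemma W_sig: "W (r, sig r) = vinf r" using sig by blast

lemma W_ge_c: "a \<in> Act q \<Longrightarrow> c q a \<le> W (q, a)"
  unfolding W_def using Ex_nonneg[of q a "\<lambda>\<beta>. sum_list (map vinf \<beta>)"] vinf_nonneg
  by (simp add: sl_nonneg)

lemma W_super: "a \<in> Act q \<Longrightarrow> c q a + Ex q a (\<lambda>\<beta>. sum_list (map (\<lambda>x. W (x, sig x)) \<beta>)) = W (q, a)"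
  by (simp only: W_sig) (simp add: W_def)

lemma W_le_Qstar: "a \<in> Act q \<Longrightarrow> ennreal (W (q, a)) \<le> Qstar Act p c q a"
  unfolding W_def by (auto intro: Qstar_ge vinf_nonneg vinf_le_cstar)

end

lemma sum_list_sum_distrib: "sum_list (map (\<lambda>x. \<Sum>t\<in>T. h t x) xs) = (\<Sum>t\<in>T. sum_list (map (h t) xs))"
  for h :: "_ \<Rightarrow> _ \<Rightarrow> real"
  by (induction xs) (auto simp: sum.distrib)

lemma sum_list_cmult: "sum_list (map (\<lambda>x. k * h x) xs) = k * sum_list (map h xs)" for h :: "_ \<Rightarrow> real"
  by (induction xs) (auto simp: algebra_simps)

lemma sum_list_add: "sum_list (map (\<lambda>x. g x + h x) xs) = sum_list (map g xs) + sum_list (map h xs)" for h :: "_ \<Rightarrow> real"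
  by (induction xs) (auto simp: algebra_simps)

lemma sum_list_diff: "sum_list (map (\<lambda>x. g x - h x) xs) = sum_list (map g xs) - sum_list (map h xs)" for h :: "_ \<Rightarrow> real"
  by (induction xs) (auto simp: algebra_simps)

context bm begin

definition S :: "('q \<times> 'a) set" where "S = {s. snd s \<in> Act (fst s)}"

lemma finite_S: "finite S" by simp

lemma S_sig: "(x, sig x) \<in> S" unfolding S_def using sig_Act by simp

lemma Ex_sum: "Ex q a (\<lambda>\<beta>. \<Sum>t\<in>T. g t \<beta>) = (\<Sum>t\<in>T. Ex q a (g t))"
  unfolding Ex_def by (simp add: sum_distrib_left) (rule sum.swap)

definition Mop :: "('q \<times> 'a \<Rightarrow> real) \<Rightarrow> 'q \<times> 'a \<Rightarrow> real" where
  "Mop f s = Ex (fst s) (snd s) (\<lambda>\<beta>. sum_list (map (\<lambda>x. f (x, sig x)) \<beta>))"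

lemma Mop_cong: "(\<And>t. t \<in> S \<Longrightarrow> f t = g t) \<Longrightarrow> Mop f s = Mop g s"
proof -
  assume fg: "\<And>t. t \<in> S \<Longrightarrow> f t = g t"
  have eq: "map (\<lambda>x. f (x, sig x)) \<beta> = map (\<lambda>x. g (x, sig x)) \<beta>" for \<beta>
    using fg S_sig by (intro map_cong) auto
  show ?thesis unfolding Mop_def eq ..
qed

lemma Mop_mono: "s \<in> S \<Longrightarrow> (\<And>t. t \<in> S \<Longrightarrow> f t \<le> g t) \<Longrightarrow> Mop f s \<le> Mop g s"
  unfolding Mop_def using S_sig by (intro Ex_mono sum_list_mono) auto

lemma Mop_nonneg: "s \<in> S \<Longrightarrow> (\<And>t. t \<in> S \<Longrightarrow> 0 \<le> f t) \<Longrightarrow> 0 \<le> Mop f s"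
  using Mop_mono[of s "\<lambda>_. 0" f] by (simp add: Mop_def Ex_def)

lemma Mop_sum: "Mop (\<lambda>u. \<Sum>t\<in>T. g t u) s = (\<Sum>t\<in>T. Mop (g t) s)"
  unfolding Mop_def by (simp add: sum_list_sum_distrib Ex_sum)

lemma Mop_cmult: "Mop (\<lambda>u. k * g u) s = k * Mop g s"
  unfolding Mop_def by (simp add: sum_list_cmult Ex_cmult)

lemma Mop_add: "Mop (\<lambda>u. f u + g u) s = Mop f s + Mop g s"
  unfolding Mop_def by (simp add: sum_list_add Ex_add)

lemma Mop_diff: "Mop (\<lambda>u. f u - g u) s = Mop f s - Mop g s"
  unfolding Mop_def by (simp add: sum_list_diff Ex_diff)

lemma W_eq: "s \<in> S \<Longrightarrow> c (fst s) (snd s) + Mop W s = W s"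
  unfolding Mop_def S_def using W_super[of "snd s" "fst s"] by auto

definition Wmin :: real where "Wmin = Min (W ` S)"
definition Wmax :: real where "Wmax = Max (W ` S)"
definition cmn :: real where "cmn = Min ((\<lambda>s. c (fst s) (snd s)) ` S)"

lemma S_ne: "S \<noteq> {}"
proof -
  obtain q :: 'q where True by simp
  obtain a where "a \<in> Act q" using Act_ne by blast
  then show ?thesis unfolding S_def by auto
qed

lemma cmn_pos: "cmn > 0" unfolding cmn_def using S_ne cpos by (subst Min_gr_iff) (auto simp: S_def)
lemma cmn_le: "s \<in> S \<Longrightarrow> cmn \<le> c (fst s) (snd s)" unfolding cmn_def by auto
lemma W_ge_c': "s \<in> S \<Longrightarrow> c (fst s) (snd s) \<le> W s" using W_ge_c[of "snd s" "fst s"] by (auto simp: S_def)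
lemma Wmin_le: "s \<in> S \<Longrightarrow> Wmin \<le> W s" unfolding Wmin_def by auto
lemma Wmax_ge: "s \<in> S \<Longrightarrow> W s \<le> Wmax" unfolding Wmax_def by auto
lemma W_pos: "s \<in> S \<Longrightarrow> W s > 0"
proof -
  assume s: "s \<in> S"
  have "0 < c (fst s) (snd s)" using s cpos by (auto simp: S_def)
  then show ?thesis using W_ge_c'[OF s] by linarith
qed
lemma Wmin_pos: "Wmin > 0" unfolding Wmin_def using S_ne W_pos
  by (subst Min_gr_iff) auto
lemma Wmax_pos: "Wmax > 0"
proof -
  obtain s where s: "s \<in> S" using S_ne by blast
  show ?thesis using W_pos[OF s] Wmax_ge[OF s] by linarith
qed

definition gam :: real where "gam = 1 - cmn / Wmax"

lemma gam_lt1: "gam < 1" unfolding gam_def using cmn_pos Wmax_pos by simp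
lemma gam_nonneg: "0 \<le> gam"
proof -
  obtain s where s: "s \<in> S" using S_ne by blast
  have "cmn \<le> Wmax" using cmn_le[OF s] W_ge_c'[OF s] Wmax_ge[OF s] by linarith
  then show ?thesis unfolding gam_def using Wmax_pos by (simp add: field_simps)
qed

lemma MW_le: "s \<in> S \<Longrightarrow> Mop W s \<le> gam * W s"
proof -
  assume s: "s \<in> S"
  have "Mop W s = W s - c (fst s) (snd s)" using W_eq[OF s] by simp
  also have "\<dots> \<le> W s - cmn * W s / Wmax"
  proof -
    have "cmn * W s / Wmax \<le> cmn" using Wmax_ge[OF s] Wmax_pos cmn_pos W_pos[OF s]
      by (simp add: field_simps mult_left_mono)
    then show ?thesis using cmn_le[OF s] by linarith
  qed
  also have "\<dots> = gam * W s" unfolding gam_def by (simp add: field_simps)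
  finally show ?thesis .
qed

definition Mp :: "nat \<Rightarrow> ('q \<times> 'a \<Rightarrow> real) \<Rightarrow> 'q \<times> 'a \<Rightarrow> real" where
  "Mp k = Mop ^^ k"

lemma Mp_0[simp]: "Mp 0 f = f" unfolding Mp_def by simp
lemma Mp_Suc: "Mp (Suc k) f = Mop (Mp k f)" unfolding Mp_def by simp
lemma Mp_Suc': "Mp (Suc k) f = Mp k (Mop f)" unfolding Mp_def by (simp add: funpow_Suc_right del: funpow.simps)

lemma Mp_mono: "s \<in> S \<Longrightarrow> (\<And>t. t \<in> S \<Longrightarrow> f t \<le> g t) \<Longrightarrow> Mp k f s \<le> Mp k g s"
  by (induction k arbitrary: s) (auto simp: Mp_Suc intro!: Mop_mono)

lemma Mp_nonneg: "s \<in> S \<Longrightarrow> (\<And>t. t \<in> S \<Longrightarrow> 0 \<le> f t) \<Longrightarrow> 0 \<le> Mp k f s"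
  by (induction k arbitrary: s) (auto simp: Mp_Suc intro!: Mop_nonneg)

lemma Mp_cmult: "Mp k (\<lambda>u. a * g u) s = a * Mp k g s"
proof (induction k arbitrary: s)
  case (Suc k)
  have "Mp (Suc k) (\<lambda>u. a * g u) s = Mop (\<lambda>u. a * Mp k g u) s" unfolding Mp_Suc using Suc by (simp add: Mop_def)
  then show ?case by (simp add: Mop_cmult Mp_Suc)
qed simp

lemma Mp_W: "s \<in> S \<Longrightarrow> Mp k W s \<le> gam ^ k * W s"
proof (induction k arbitrary: s)
  case (Suc k)
  have "Mp (Suc k) W s \<le> Mop (\<lambda>u. gam ^ k * W u) s"
    unfolding Mp_Suc using Suc by (intro Mop_mono) auto
  also have "\<dots> = gam ^ k * Mop W s" by (rule Mop_cmult)
  also have "\<dots> \<le> gam ^ k * (gam * W s)" using MW_le[OF Suc.prems] gam_nonneg by (intro mult_left_mono) auto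
  also have "\<dots> = gam ^ Suc k * W s" by simp
  finally show ?case .
qed simp

definition e :: "'q \<times> 'a \<Rightarrow> 'q \<times> 'a \<Rightarrow> real" where "e t u = (if u = t then 1 else 0)"

lemma Mp_repr: "s \<in> S \<Longrightarrow> Mp k f s = (\<Sum>t\<in>S. f t * Mp k (e t) s)"
proof (induction k arbitrary: s)
  case 0 then show ?case by (simp add: e_def if_distrib cong: if_cong)
next
  case (Suc k)
  have "Mp (Suc k) f s = Mop (\<lambda>u. \<Sum>t\<in>S. f t * Mp k (e t) u) s"
    unfolding Mp_Suc using Suc.IH by (intro Mop_cong) auto
  also have "\<dots> = (\<Sum>t\<in>S. f t * Mp (Suc k) (e t) s)"
    by (simp add: Mop_sum Mop_cmult Mp_Suc)
  finally show ?case .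
qed

lemma Mp_bound:
  assumes s: "s \<in> S" and f0: "\<And>t. t \<in> S \<Longrightarrow> 0 \<le> f t"
  shows "Mp k f s \<le> ((\<Sum>t\<in>S. f t) / Wmin * Wmax) * gam ^ k"
proof -
  have "Mp k f s \<le> Mp k (\<lambda>u. ((\<Sum>t\<in>S. f t) / Wmin) * W u) s"
  proof (intro Mp_mono s)
    fix t assume t: "t \<in> S"
    have "f t \<le> (\<Sum>t\<in>S. f t)" using t f0 by (intro member_le_sum) auto
    also have "\<dots> \<le> (\<Sum>t\<in>S. f t) / Wmin * W t"
      using Wmin_le[OF t] Wmin_pos sum_nonneg[of S f] f0
      by (simp add: field_simps mult_left_mono)
    finally show "f t \<le> (\<Sum>t\<in>S. f t) / Wmin * W t" .
  qed
  also have "\<dots> = ((\<Sum>t\<in>S. f t) / Wmin) * Mp k W s" by (rule Mp_cmult)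
  also have "\<dots> \<le> ((\<Sum>t\<in>S. f t) / Wmin) * (gam ^ k * Wmax)"
  proof (intro mult_left_mono)
    have "gam ^ k * W s \<le> gam ^ k * Wmax" using Wmax_ge[OF s] gam_nonneg by (intro mult_left_mono) auto
    then show "Mp k W s \<le> gam ^ k * Wmax" using Mp_W[OF s, of k] by linarith
    show "0 \<le> (\<Sum>t\<in>S. f t) / Wmin" using Wmin_pos sum_nonneg[of S f] f0 by simp
  qed
  finally show ?thesis by (simp add: algebra_simps)
qed

lemma Mp_summable:
  assumes s: "s \<in> S" and f0: "\<And>t. t \<in> S \<Longrightarrow> 0 \<le> f t"
  shows "summable (\<lambda>k. Mp k f s)"
proof (rule summable_comparison_test'[where N=0 and g="\<lambda>k. ((\<Sum>t\<in>S. f t) / Wmin * Wmax) * gam ^ k"])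
  show "summable (\<lambda>k. ((\<Sum>t\<in>S. f t) / Wmin * Wmax) * gam ^ k)"
    using gam_nonneg gam_lt1 by (intro summable_mult summable_geometric) auto
  fix n :: nat
  have "norm (Mp n f s) = Mp n f s" using Mp_nonneg[OF s f0, where k=n] by simp
  then show "norm (Mp n f s) \<le> ((\<Sum>t\<in>S. f t) / Wmin * Wmax) * gam ^ n"
    using Mp_bound[OF s f0, where k=n] by simp
qed

definition Lam :: "('q \<times> 'a \<Rightarrow> real) \<Rightarrow> real" where
  "Lam f = (\<Sum>k. \<Sum>s\<in>S. Mp k f s)"

definition y :: "'q \<times> 'a \<Rightarrow> real" where "y t = Lam (e t)"

lemma e_nonneg: "0 \<le> e t u" unfolding e_def by simp

lemma Lam_repr:
  assumes f0: "\<And>t. t \<in> S \<Longrightarrow> 0 \<le> f t"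
  shows "Lam f = (\<Sum>t\<in>S. y t * f t)"
proof -
  have "(\<Sum>s\<in>S. Mp k f s) = (\<Sum>t\<in>S. f t * (\<Sum>s\<in>S. Mp k (e t) s))" for k
  proof -
    have "(\<Sum>s\<in>S. Mp k f s) = (\<Sum>s\<in>S. \<Sum>t\<in>S. f t * Mp k (e t) s)"
      by (intro sum.cong refl Mp_repr)
    also have "\<dots> = (\<Sum>t\<in>S. \<Sum>s\<in>S. f t * Mp k (e t) s)" by (rule sum.swap)
    also have "\<dots> = (\<Sum>t\<in>S. f t * (\<Sum>s\<in>S. Mp k (e t) s))" by (simp add: sum_distrib_left)
    finally show ?thesis .
  qed
  then have "Lam f = (\<Sum>k. \<Sum>t\<in>S. f t * (\<Sum>s\<in>S. Mp k (e t) s))"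
    unfolding Lam_def by simp
  also have "\<dots> = (\<Sum>t\<in>S. \<Sum>k. f t * (\<Sum>s\<in>S. Mp k (e t) s))"
    by (intro suminf_sum summable_mult summable_sum Mp_summable e_nonneg)
  also have "\<dots> = (\<Sum>t\<in>S. f t * y t)"
    unfolding y_def Lam_def
    by (intro sum.cong refl suminf_mult summable_sum Mp_summable e_nonneg)
  finally show ?thesis by (simp add: mult.commute)
qed

lemma y_ge1: "t \<in> S \<Longrightarrow> 1 \<le> y t"
proof -
  assume t: "t \<in> S"
  have sm: "summable (\<lambda>k. \<Sum>s\<in>S. Mp k (e t) s)" by (intro summable_sum Mp_summable e_nonneg)
  have "(\<Sum>k. \<Sum>s\<in>S. Mp (Suc k) (e t) s) = y t - (\<Sum>s\<in>S. e t s)"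
    unfolding y_def Lam_def using suminf_split_head[OF sm] by simp
  moreover have "0 \<le> (\<Sum>k. \<Sum>s\<in>S. Mp (Suc k) (e t) s)"
    using sm by (intro suminf_nonneg summable_ignore_initial_segment[of _ 1, simplified] sum_nonneg Mp_nonneg e_nonneg)
      (auto simp: Suc_eq_plus1)
  moreover have "(\<Sum>s\<in>S. e t s) = 1" using t by (simp add: e_def)
  ultimately show ?thesis by simp
qed

lemma Lam_Mop:
  assumes f0: "\<And>t. t \<in> S \<Longrightarrow> 0 \<le> f t"
  shows "Lam (Mop f) = Lam f - (\<Sum>s\<in>S. f s)"
proof -
  have sm: "summable (\<lambda>k. \<Sum>s\<in>S. Mp k f s)" by (intro summable_sum Mp_summable f0)
  have "Lam (Mop f) = (\<Sum>k. \<Sum>s\<in>S. Mp (Suc k) f s)" unfolding Lam_def Mp_Suc' ..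
  also have "\<dots> = Lam f - (\<Sum>s\<in>S. f s)" unfolding Lam_def using suminf_split_head[OF sm] by simp
  finally show ?thesis .
qed

definition ymax :: real where "ymax = Max (y ` S)"

lemma ymax_ge: "t \<in> S \<Longrightarrow> y t \<le> ymax" unfolding ymax_def by auto
lemma ymax_ge1: "1 \<le> ymax" using S_ne y_ge1 ymax_ge by (meson all_not_in_conv order_trans)

definition gam' :: real where "gam' = 1 - 1 / ymax"

lemma gam'_lt1: "gam' < 1" unfolding gam'_def using ymax_ge1 by simp
lemma gam'_nonneg: "0 \<le> gam'" unfolding gam'_def using ymax_ge1 by simp

lemma left_contract:
  assumes f0: "\<And>t. t \<in> S \<Longrightarrow> 0 \<le> f t"
  shows "(\<Sum>t\<in>S. y t * Mop f t) \<le> gam' * (\<Sum>t\<in>S. y t * f t)"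
proof -
  have Mf0: "\<And>t. t \<in> S \<Longrightarrow> 0 \<le> Mop f t" by (intro Mop_nonneg f0)
  have "(\<Sum>t\<in>S. y t * Mop f t) = Lam (Mop f)" using Lam_repr[OF Mf0] by simp
  also have "\<dots> = (\<Sum>t\<in>S. y t * f t) - (\<Sum>s\<in>S. f s)" using Lam_Mop[OF f0] Lam_repr[OF f0] by simp
  also have "\<dots> \<le> gam' * (\<Sum>t\<in>S. y t * f t)"
  proof -
    have "(\<Sum>t\<in>S. y t * f t) \<le> (\<Sum>t\<in>S. ymax * f t)"
      using f0 ymax_ge by (intro sum_mono mult_right_mono) auto
    also have "(\<Sum>t\<in>S. ymax * f t) = ymax * (\<Sum>s\<in>S. f s)" by (simp add: sum_distrib_left)
    finally have "(\<Sum>t\<in>S. y t * f t) / ymax \<le> (\<Sum>s\<in>S. f s)"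
      using ymax_ge1 by (simp add: field_simps)
    then show ?thesis unfolding gam'_def by (simp add: algebra_simps)
  qed
  finally show ?thesis .
qed

end

lemma amgm2:
  fixes zs zt ws wt :: real
  assumes "0 < ws" "0 < wt"
  shows "zs * zt \<le> (zs\<^sup>2 * wt / ws + zt\<^sup>2 * ws / wt) / 2"
proof -
  have sq: "0 \<le> (zs*wt - zt*ws)^2" by simp
  have "zs * zt * (2 * ws * wt) \<le> zs\<^sup>2 * wt\<^sup>2 + zt\<^sup>2 * ws\<^sup>2"
    using sq by (simp add: power2_eq_square algebra_simps)
  then have "zs * zt \<le> (zs\<^sup>2 * wt\<^sup>2 + zt\<^sup>2 * ws\<^sup>2) / (2 * ws * wt)"
    using assms by (simp add: field_simps)
  also have "\<dots> = (zs\<^sup>2 * wt / ws + zt\<^sup>2 * ws / wt) / 2"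
    using assms by (simp add: field_simps power2_eq_square)
  finally show ?thesis .
qed

context bm begin

definition aw :: "'q \<times> 'a \<Rightarrow> real" where "aw s = y s / W s"

lemma aw_pos: "s \<in> S \<Longrightarrow> 0 < aw s"
  unfolding aw_def using y_ge1[of s] W_pos[of s] by simp

definition gbar :: real where "gbar = (gam + gam') / 2"

lemma gbar_lt1: "gbar < 1" unfolding gbar_def using gam_lt1 gam'_lt1 by simp

lemma amgm_comb:
  assumes z0: "\<And>t. t \<in> S \<Longrightarrow> 0 \<le> z t"
  shows "(\<Sum>s\<in>S. aw s * z s * Mop z s) \<le> gbar * (\<Sum>s\<in>S. aw s * (z s)\<^sup>2)"
proof -
  define f where "f u = (z u)\<^sup>2 / W u" for u
  have f0: "0 \<le> f t" if t: "t \<in> S" for t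
  proof -
    have "0 < W t" using t by (rule W_pos)
    then show ?thesis unfolding f_def by simp
  qed
  have pt: "aw s * z s * Mop z s \<le> gam / 2 * (aw s * (z s)\<^sup>2) + (y s * Mop f s) / 2" if s: "s \<in> S" for s
  proof -
    have "z s * Mop z s = Mop (\<lambda>u. z s * z u) s" by (simp add: Mop_cmult)
    also have "\<dots> \<le> Mop (\<lambda>u. ((z s)\<^sup>2 / W s / 2) * W u + (W s / 2) * f u) s"
    proof (intro Mop_mono s)
      fix t assume t: "t \<in> S"
      have "z s * z t \<le> ((z s)\<^sup>2 * W t / W s + (z t)\<^sup>2 * W s / W t) / 2"
        by (rule amgm2) (auto intro: W_pos s t)
      also have "\<dots> = ((z s)\<^sup>2 / W s / 2) * W t + (W s / 2) * f t"
        unfolding f_def by (simp add: field_simps)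
      finally show "z s * z t \<le> ((z s)\<^sup>2 / W s / 2) * W t + (W s / 2) * f t" .
    qed
    also have "\<dots> = ((z s)\<^sup>2 / W s / 2) * Mop W s + (W s / 2) * Mop f s"
      by (simp only: Mop_add Mop_cmult)
    also have "\<dots> \<le> ((z s)\<^sup>2 / W s / 2) * (gam * W s) + (W s / 2) * Mop f s"
      using MW_le[OF s] W_pos[OF s] by (intro add_mono mult_left_mono) auto
    finally have "z s * Mop z s \<le> ((z s)\<^sup>2 / W s / 2) * (gam * W s) + (W s / 2) * Mop f s" .
    then have "aw s * (z s * Mop z s) \<le> aw s * (((z s)\<^sup>2 / W s / 2) * (gam * W s) + (W s / 2) * Mop f s)"
      using aw_pos[OF s] by (intro mult_left_mono) auto
    also have "\<dots> = gam / 2 * (aw s * (z s)\<^sup>2) + (y s * Mop f s) / 2"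
      unfolding aw_def using W_pos[OF s] by (simp add: field_simps)
    finally show ?thesis by (simp add: mult.assoc)
  qed
  have "(\<Sum>s\<in>S. aw s * z s * Mop z s) \<le> (\<Sum>s\<in>S. gam / 2 * (aw s * (z s)\<^sup>2) + (y s * Mop f s) / 2)"
    by (intro sum_mono pt)
  also have "\<dots> = gam / 2 * (\<Sum>s\<in>S. aw s * (z s)\<^sup>2) + (\<Sum>s\<in>S. y s * Mop f s) / 2"
    by (simp add: sum.distrib sum_distrib_left sum_divide_distrib)
  also have "\<dots> \<le> gam / 2 * (\<Sum>s\<in>S. aw s * (z s)\<^sup>2) + (gam' * (\<Sum>s\<in>S. y s * f s)) / 2"
    using left_contract[OF f0] by simp
  also have "(\<Sum>s\<in>S. y s * f s) = (\<Sum>s\<in>S. aw s * (z s)\<^sup>2)"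
    unfolding f_def aw_def by (simp add: field_simps)
  finally show ?thesis unfolding gbar_def by (simp add: field_simps)
qed

end

locale bms = bm Act p c for Act :: "'q::finite \<Rightarrow> 'a::finite set" and p c +
  fixes sel :: "('q \<times> 'a) pmf" and pmin :: real and lr :: "nat \<Rightarrow> real"
  assumes sel_supp: "set_pmf sel \<subseteq> {(q, a). a \<in> Act q}"
    and pmin_pos: "pmin > 0"
    and sel_ge: "\<forall>q. \<forall>a\<in>Act q. pmf sel (q, a) \<ge> pmin"
    and lr01: "\<forall>i. 0 \<le> lr i \<and> lr i \<le> 1"
begin

lemma sel_S: "set_pmf sel \<subseteq> S" using sel_supp unfolding S_def by auto
lemma sel_ge': "s \<in> S \<Longrightarrow> pmin \<le> pmf sel s" using sel_ge unfolding S_def by (cases s) auto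
lemma sel_pos: "s \<in> S \<Longrightarrow> 0 < pmf sel s" using sel_ge'[of s] pmin_pos by linarith
lemma sel_sum: "(\<Sum>s\<in>S. pmf sel s) = 1" using sum_pmf_eq_1[OF finite_S sel_S] .

definition ED :: "(('q \<times> 'a) \<times> 'q list \<Rightarrow> real) \<Rightarrow> real" where
  "ED f = (\<Sum>s\<in>S. pmf sel s * Ex (fst s) (snd s) (\<lambda>\<beta>. f (s, \<beta>)))"

lemma S_fin_supp: "s \<in> S \<Longrightarrow> finite (set_pmf (p (fst s) (snd s)))"
  using fin_supp unfolding S_def by auto

lemma ED_nn:
  assumes f0: "\<And>x. 0 \<le> f x"
  shows "(\<integral>\<^sup>+x. ennreal (f x) \<partial>measure_pmf (step_dist p sel)) = ennreal (ED f)"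
proof -
  have "(\<integral>\<^sup>+x. ennreal (f x) \<partial>measure_pmf (step_dist p sel))
      = (\<integral>\<^sup>+s. (\<integral>\<^sup>+\<beta>. ennreal (f (s, \<beta>)) \<partial>measure_pmf (p (fst s) (snd s))) \<partial>measure_pmf sel)"
    unfolding step_dist_def by simp
  also have "\<dots> = (\<integral>\<^sup>+s. ennreal (Ex (fst s) (snd s) (\<lambda>\<beta>. f (s, \<beta>))) \<partial>measure_pmf sel)"
    using sel_supp f0 by (intro nn_integral_cong_AE) (auto simp: AE_measure_pmf_iff intro!: Ex_nn)
  also have "\<dots> = (\<Sum>s\<in>S. ennreal (Ex (fst s) (snd s) (\<lambda>\<beta>. f (s, \<beta>))) * pmf sel s)"
    using sel_S by (intro nn_integral_measure_pmf_support) auto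
  also have "\<dots> = ennreal (ED f)"
    unfolding ED_def using f0
    by (subst sum_ennreal[symmetric]) (auto simp: ennreal_mult' mult.commute intro!: sum.cong Ex_nonneg mult_nonneg_nonneg)
  finally show ?thesis .
qed

lemma ED_mono: "(\<And>s \<beta>. s \<in> S \<Longrightarrow> \<beta> \<in> set_pmf (p (fst s) (snd s)) \<Longrightarrow> f (s, \<beta>) \<le> g (s, \<beta>)) \<Longrightarrow> ED f \<le> ED g"
  unfolding ED_def by (intro sum_mono mult_left_mono Ex_mono) auto

definition bw :: "'q \<times> 'a \<Rightarrow> real" where "bw s = aw s / pmf sel s"

lemma bw_pos: "s \<in> S \<Longrightarrow> 0 < bw s" unfolding bw_def using aw_pos sel_pos by simp

definition pos :: "real \<Rightarrow> real" where "pos t = max t 0"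

definition V :: "('q \<times> 'a \<Rightarrow> real) \<Rightarrow> real" where
  "V U = (\<Sum>s\<in>S. bw s * (pos (U s - W s))\<^sup>2)"

definition Xf :: "('q \<times> 'a \<Rightarrow> real) \<Rightarrow> 'q \<times> 'a \<Rightarrow> 'q list \<Rightarrow> real" where
  "Xf U s \<beta> = c (fst s) (snd s) + sum_list (map (\<lambda>x. U (x, sig x)) \<beta>) - U s"

definition stepU :: "nat \<Rightarrow> ('q \<times> 'a \<Rightarrow> real) \<Rightarrow> ('q \<times> 'a) \<times> 'q list \<Rightarrow> ('q \<times> 'a \<Rightarrow> real)" where
  "stepU i U x = U(fst x := U (fst x) + lr i * Xf U (fst x) (snd x))"

lemma V_nonneg: "0 \<le> V U" unfolding V_def using bw_pos by (intro sum_nonneg mult_nonneg_nonneg) (auto intro: less_imp_le)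

lemma V_update: "s \<in> S \<Longrightarrow> V (U(s := v)) = V U - bw s * (pos (U s - W s))\<^sup>2 + bw s * (pos (v - W s))\<^sup>2"
proof -
  assume s: "s \<in> S"
  have "V (U(s := v)) = bw s * (pos (v - W s))\<^sup>2 + (\<Sum>t\<in>S - {s}. bw t * (pos (U t - W t))\<^sup>2)"
    unfolding V_def using s by (subst sum.remove[OF finite_S s]) (auto intro!: sum.cong)
  moreover have "V U = bw s * (pos (U s - W s))\<^sup>2 + (\<Sum>t\<in>S - {s}. bw t * (pos (U t - W t))\<^sup>2)"
    unfolding V_def using s by (subst sum.remove[OF finite_S s]) auto
  ultimately show ?thesis by simp
qed

lemma pos_sq_le: "(pos (t + h))\<^sup>2 \<le> (pos t + h)\<^sup>2"
  unfolding pos_def by (cases "t + h \<le> 0") (auto simp: max_def power2_eq_square intro: mult_mono)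


lemma pos_nonneg: "0 \<le> pos t" unfolding pos_def by simp
lemma pos_ge: "t \<le> pos t" unfolding pos_def by simp
lemma pos_mult: "pos t * t = (pos t)\<^sup>2" unfolding pos_def by (simp add: max_def power2_eq_square)

lemma drift_pt:
  assumes s: "s \<in> S" and l0: "0 \<le> lr i"
  shows "V (stepU i U (s, \<beta>)) \<le> V U + bw s * (2 * lr i * pos (U s - W s) * Xf U s \<beta> + (lr i)\<^sup>2 * (Xf U s \<beta>)\<^sup>2)"
proof -
  let ?X = "Xf U s \<beta>" and ?G = "U s - W s"
  have "stepU i U (s, \<beta>) = U(s := U s + lr i * ?X)" by (simp add: stepU_def)
  then have "V (stepU i U (s, \<beta>)) = V U - bw s * (pos ?G)\<^sup>2 + bw s * (pos (U s + lr i * ?X - W s))\<^sup>2"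
    using V_update[OF s, where U=U and v="U s + lr i * ?X"] by simp
  also have "\<dots> \<le> V U - bw s * (pos ?G)\<^sup>2 + bw s * (pos ?G + lr i * ?X)\<^sup>2"
  proof -
    have "(pos (U s + lr i * ?X - W s))\<^sup>2 \<le> (pos ?G + lr i * ?X)\<^sup>2"
      using pos_sq_le[of ?G "lr i * ?X"] by (simp add: algebra_simps)
    then show ?thesis using bw_pos[OF s] by (intro add_mono mult_left_mono order_refl) auto
  qed
  also have "\<dots> = V U + bw s * (2 * lr i * pos ?G * ?X + (lr i)\<^sup>2 * ?X\<^sup>2)"
    by (simp add: power2_eq_square algebra_simps)
  finally show ?thesis .
qed

lemma Ex_Xf: "s \<in> S \<Longrightarrow> Ex (fst s) (snd s) (Xf U s) = Mop (\<lambda>u. U u - W u) s - (U s - W s)"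
proof -
  assume s: "s \<in> S"
  have "Ex (fst s) (snd s) (Xf U s) = Ex (fst s) (snd s) (\<lambda>\<beta>. (c (fst s) (snd s) - U s) + sum_list (map (\<lambda>x. U (x, sig x)) \<beta>))"
    unfolding Xf_def by (simp add: algebra_simps)
  also have "\<dots> = c (fst s) (snd s) - U s + Mop U s"
    using s by (simp add: Ex_add Ex_const Mop_def S_def)
  also have "\<dots> = Mop (\<lambda>u. U u - W u) s - (U s - W s)"
    using W_eq[OF s] by (simp add: Mop_diff)
  finally show ?thesis .
qed

definition Lm :: nat where "Lm = Max (\<Union>s\<in>S. length ` set_pmf (p (fst s) (snd s)))"

lemma Lm_ge: "s \<in> S \<Longrightarrow> \<beta> \<in> set_pmf (p (fst s) (snd s)) \<Longrightarrow> length \<beta> \<le> Lm"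
  unfolding Lm_def by (rule Max_ge) (auto intro: finite_UN_I S_fin_supp)

definition cmx :: real where "cmx = Max ((\<lambda>s. c (fst s) (snd s)) ` S)"
lemma cmx_ge: "s \<in> S \<Longrightarrow> c (fst s) (snd s) \<le> cmx" unfolding cmx_def by auto

definition bmin :: real where "bmin = Min (bw ` S)"
lemma bmin_le: "s \<in> S \<Longrightarrow> bmin \<le> bw s" unfolding bmin_def by auto
lemma bmin_pos: "0 < bmin" unfolding bmin_def using S_ne bw_pos by (subst Min_gr_iff) auto

definition Acon :: real where "Acon = cmx + (real Lm + 1) * Wmax"
definition K1 :: real where "K1 = (\<Sum>s\<in>S. aw s) * 2 * Acon\<^sup>2"
definition K2 :: real where "K2 = (\<Sum>s\<in>S. aw s) * 2 * (real Lm + 1)\<^sup>2 * card S / bmin"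

lemma asum_nonneg: "0 \<le> (\<Sum>s\<in>S. aw s)" by (intro sum_nonneg) (auto intro: less_imp_le aw_pos)
lemma K1_nonneg: "0 \<le> K1" unfolding K1_def using asum_nonneg by simp
lemma K2_nonneg: "0 \<le> K2" unfolding K2_def using asum_nonneg bmin_pos by simp

lemma Xf_bound:
  assumes U0: "\<And>t. t \<in> S \<Longrightarrow> 0 \<le> U t" and s: "s \<in> S" and \<beta>: "\<beta> \<in> set_pmf (p (fst s) (snd s))"
  shows "\<bar>Xf U s \<beta>\<bar> \<le> Acon + (real Lm + 1) * (\<Sum>t\<in>S. pos (U t - W t))"
proof -
  let ?Z = "\<Sum>t\<in>S. pos (U t - W t)"
  have Ut: "U t \<le> ?Z + Wmax" if t: "t \<in> S" for t
  proof -
    have "pos (U t - W t) \<le> ?Z" using t pos_nonneg by (intro member_le_sum) auto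
    then show ?thesis using pos_ge[of "U t - W t"] Wmax_ge[OF t] by linarith
  qed
  have Z0: "0 \<le> ?Z" using pos_nonneg by (intro sum_nonneg) auto
  have sl0: "0 \<le> sum_list (map (\<lambda>x. U (x, sig x)) \<beta>)" using U0 S_sig by (intro sum_list_nonneg) auto
  have "sum_list (map (\<lambda>x. U (x, sig x)) \<beta>) \<le> sum_list (map (\<lambda>x. ?Z + Wmax) \<beta>)"
    using Ut S_sig by (intro sum_list_mono) auto
  also have "\<dots> = real (length \<beta>) * (?Z + Wmax)" by (simp add: sum_list_triv)
  also have "\<dots> \<le> real Lm * (?Z + Wmax)"
    using Lm_ge[OF s \<beta>] Z0 Wmax_pos by (intro mult_right_mono) auto
  finally have sl: "sum_list (map (\<lambda>x. U (x, sig x)) \<beta>) \<le> real Lm * (?Z + Wmax)" .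
  have c0: "0 \<le> c (fst s) (snd s)" using cpos s by (auto simp: S_def less_imp_le)
  have "Xf U s \<beta> \<le> cmx + real Lm * (?Z + Wmax)"
    unfolding Xf_def using sl cmx_ge[OF s] U0[OF s] by linarith
  moreover have "- Xf U s \<beta> \<le> ?Z + Wmax"
    unfolding Xf_def using sl0 c0 Ut[OF s] by linarith
  moreover have "0 \<le> real Lm * ?Z" "0 \<le> real Lm * Wmax" using Z0 Wmax_pos by auto
  moreover have "real Lm * (?Z + Wmax) = real Lm * ?Z + real Lm * Wmax" by (simp add: distrib_left)
  ultimately show ?thesis unfolding Acon_def abs_le_iff distrib_right mult_1 using cmx_ge[OF s] c0 Z0 Wmax_pos
    by (intro conjI) linarith+
qed

lemma sq_sum_le: "(a + b)\<^sup>2 \<le> 2 * a\<^sup>2 + 2 * b\<^sup>2" for a b :: real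
proof -
  have "0 \<le> (a - b)\<^sup>2" by simp
  then show ?thesis by (simp add: power2_eq_square algebra_simps)
qed

lemma Acon_nonneg: "0 \<le> Acon"
proof -
  obtain s where s: "s \<in> S" using S_ne by blast
  have "0 < c (fst s) (snd s)" using cpos s by (auto simp: S_def)
  then have "0 \<le> cmx" using cmx_ge[OF s] by linarith
  then show ?thesis unfolding Acon_def using Wmax_pos by simp
qed

lemma Xf_sq_bound:
  assumes U0: "\<And>t. t \<in> S \<Longrightarrow> 0 \<le> U t" and s: "s \<in> S" and \<beta>: "\<beta> \<in> set_pmf (p (fst s) (snd s))"
  shows "(Xf U s \<beta>)\<^sup>2 \<le> 2 * Acon\<^sup>2 + 2 * (real Lm + 1)\<^sup>2 * card S * V U / bmin"
proof -
  let ?Z = "\<Sum>t\<in>S. pos (U t - W t)"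
  have Z0: "0 \<le> ?Z" using pos_nonneg by (intro sum_nonneg) auto
  have "(Xf U s \<beta>)\<^sup>2 = \<bar>Xf U s \<beta>\<bar>\<^sup>2" by simp
  also have "\<dots> \<le> (Acon + (real Lm + 1) * ?Z)\<^sup>2"
    using Xf_bound[OF U0 s \<beta>] by (intro power_mono) auto
  also have "\<dots> \<le> 2 * Acon\<^sup>2 + 2 * ((real Lm + 1) * ?Z)\<^sup>2" by (rule sq_sum_le)
  finally have h1: "(Xf U s \<beta>)\<^sup>2 \<le> 2 * Acon\<^sup>2 + 2 * (real Lm + 1)\<^sup>2 * ?Z\<^sup>2" by (simp add: power_mult_distrib)
  have h2: "?Z\<^sup>2 \<le> (\<Sum>t\<in>S. (pos (U t - W t))\<^sup>2) * card S" by (rule sum_squared_le_sum_of_squares)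
  have h3: "(\<Sum>t\<in>S. (pos (U t - W t))\<^sup>2) \<le> V U / bmin"
  proof -
    have "bmin * (\<Sum>t\<in>S. (pos (U t - W t))\<^sup>2) = (\<Sum>t\<in>S. bmin * (pos (U t - W t))\<^sup>2)" by (simp add: sum_distrib_left)
    also have "\<dots> \<le> V U" unfolding V_def using bmin_le by (intro sum_mono mult_right_mono) auto
    finally show ?thesis using bmin_pos by (simp add: field_simps)
  qed
  have "?Z\<^sup>2 \<le> V U / bmin * card S"
    using h2 h3 by (meson mult_right_mono of_nat_0_le_iff order_trans)
  then have "2 * (real Lm + 1)\<^sup>2 * ?Z\<^sup>2 \<le> 2 * (real Lm + 1)\<^sup>2 * (V U / bmin * card S)"
    by (intro mult_left_mono) auto
  with h1 show ?thesis by (simp add: field_simps)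
qed


definition kap :: real where "kap = (1 - gbar) * pmin"
lemma kap_pos: "0 < kap" unfolding kap_def using gbar_lt1 pmin_pos by simp

lemma aw_eq: "s \<in> S \<Longrightarrow> pmf sel s * bw s = aw s"
  unfolding bw_def using sel_pos[of s] by simp

lemma drift:
  assumes U0: "\<And>t. t \<in> S \<Longrightarrow> 0 \<le> U t" and l0: "0 \<le> lr i"
  shows "ED (\<lambda>x. V (stepU i U x)) \<le> (1 - 2 * kap * lr i + K2 * (lr i)\<^sup>2) * V U + K1 * (lr i)\<^sup>2"
proof -
  define l where "l = lr i"
  define z where "z t = pos (U t - W t)" for t
  define EXl where "EXl s = Ex (fst s) (snd s) (Xf U s)" for s
  define EXq where "EXq s = Ex (fst s) (snd s) (\<lambda>\<beta>. (Xf U s \<beta>)\<^sup>2)" for s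
  have z0: "0 \<le> z t" for t unfolding z_def by (rule pos_nonneg)
  have "ED (\<lambda>x. V (stepU i U x)) \<le> ED (\<lambda>x. V U + bw (fst x) * (2 * l * z (fst x) * Xf U (fst x) (snd x) + l\<^sup>2 * (Xf U (fst x) (snd x))\<^sup>2))"
    unfolding l_def z_def by (intro ED_mono) (simp add: drift_pt[OF _ l0])
  also have "\<dots> = (\<Sum>s\<in>S. pmf sel s * (V U + bw s * (2 * l * z s * EXl s + l\<^sup>2 * EXq s)))"
    unfolding ED_def EXl_def EXq_def
  proof (intro sum.cong refl arg_cong2[where f="(*)"])
    fix s assume s: "s \<in> S"
    have "Ex (fst s) (snd s) (\<lambda>\<beta>. V U + bw s * (2 * l * z s * Xf U s \<beta> + l\<^sup>2 * (Xf U s \<beta>)\<^sup>2))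
        = Ex (fst s) (snd s) (\<lambda>\<beta>. V U + ((bw s * (2 * l * z s)) * Xf U s \<beta> + (bw s * l\<^sup>2) * (Xf U s \<beta>)\<^sup>2))"
      by (simp add: algebra_simps)
    also have "\<dots> = V U + bw s * (2 * l * z s * Ex (fst s) (snd s) (Xf U s) + l\<^sup>2 * Ex (fst s) (snd s) (\<lambda>\<beta>. (Xf U s \<beta>)\<^sup>2))"
      using s by (simp add: Ex_add Ex_const Ex_cmult S_def algebra_simps)
    finally show "Ex (fst s) (snd s) (\<lambda>\<beta>. V U + bw (fst (s, \<beta>)) * (2 * l * z (fst (s, \<beta>)) * Xf U (fst (s, \<beta>)) (snd (s, \<beta>)) + l\<^sup>2 * (Xf U (fst (s, \<beta>)) (snd (s, \<beta>)))\<^sup>2))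
        = V U + bw s * (2 * l * z s * Ex (fst s) (snd s) (Xf U s) + l\<^sup>2 * Ex (fst s) (snd s) (\<lambda>\<beta>. (Xf U s \<beta>)\<^sup>2))" by simp
  qed
  also have "\<dots> = V U + 2 * l * (\<Sum>s\<in>S. aw s * z s * EXl s) + l\<^sup>2 * (\<Sum>s\<in>S. aw s * EXq s)"
  proof -
    have "(\<Sum>s\<in>S. pmf sel s * (V U + bw s * (2 * l * z s * EXl s + l\<^sup>2 * EXq s)))
       = (\<Sum>s\<in>S. pmf sel s * V U + (2 * l) * (aw s * z s * EXl s) + l\<^sup>2 * (aw s * EXq s))"
      using aw_eq by (intro sum.cong refl) (simp add: algebra_simps flip: aw_eq)
    also have "\<dots> = V U + 2 * l * (\<Sum>s\<in>S. aw s * z s * EXl s) + l\<^sup>2 * (\<Sum>s\<in>S. aw s * EXq s)"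
      by (simp add: sum.distrib sum_distrib_left[symmetric] sum_distrib_right[symmetric] sel_sum)
    finally show ?thesis .
  qed
  also have "\<dots> \<le> V U + 2 * l * ((gbar - 1) * pmin * V U) + l\<^sup>2 * (K1 + K2 * V U)"
  proof (intro add_mono order_refl mult_left_mono)
    show "0 \<le> 2 * l" "0 \<le> l\<^sup>2" using l0 unfolding l_def by auto
    have "(\<Sum>s\<in>S. aw s * z s * EXl s) \<le> (\<Sum>s\<in>S. aw s * z s * Mop z s - aw s * (z s)\<^sup>2)"
    proof (intro sum_mono)
      fix s assume s: "s \<in> S"
      have "EXl s = Mop (\<lambda>u. U u - W u) s - (U s - W s)" unfolding EXl_def by (rule Ex_Xf[OF s])
      also have "\<dots> \<le> Mop z s - (U s - W s)"
        using s unfolding z_def by (intro diff_right_mono Mop_mono) (auto intro: pos_ge)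
      finally have "z s * EXl s \<le> z s * (Mop z s - (U s - W s))" using z0 by (intro mult_left_mono) auto
      also have "\<dots> = z s * Mop z s - (z s)\<^sup>2" unfolding z_def using pos_mult[of "U s - W s"] by (simp add: algebra_simps)
      finally have "z s * EXl s \<le> z s * Mop z s - (z s)\<^sup>2" .
      then have "aw s * (z s * EXl s) \<le> aw s * (z s * Mop z s - (z s)\<^sup>2)"
        using aw_pos[OF s] by (intro mult_left_mono) auto
      then show "aw s * z s * EXl s \<le> aw s * z s * Mop z s - aw s * (z s)\<^sup>2" by (simp add: algebra_simps)
    qed
    also have "\<dots> = (\<Sum>s\<in>S. aw s * z s * Mop z s) - (\<Sum>s\<in>S. aw s * (z s)\<^sup>2)" by (simp add: sum_subtractf)
    also have "\<dots> \<le> gbar * (\<Sum>s\<in>S. aw s * (z s)\<^sup>2) - (\<Sum>s\<in>S. aw s * (z s)\<^sup>2)"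
      using amgm_comb[of z] z0 by simp
    also have "\<dots> = (gbar - 1) * (\<Sum>s\<in>S. aw s * (z s)\<^sup>2)" by (simp add: algebra_simps)
    also have "\<dots> \<le> (gbar - 1) * (pmin * V U)"
    proof (rule mult_left_mono_neg)
      show "gbar - 1 \<le> 0" using gbar_lt1 by simp
      have "pmin * V U = (\<Sum>s\<in>S. pmin * bw s * (z s)\<^sup>2)" unfolding V_def z_def by (simp add: sum_distrib_left algebra_simps)
      also have "\<dots> \<le> (\<Sum>s\<in>S. aw s * (z s)\<^sup>2)"
      proof (intro sum_mono mult_right_mono)
        fix s assume s: "s \<in> S"
        show "pmin * bw s \<le> aw s" using sel_ge'[OF s] bw_pos[OF s] aw_eq[OF s]
          by (metis mult_right_mono less_imp_le)
      qed simp
      finally show "pmin * V U \<le> (\<Sum>s\<in>S. aw s * (z s)\<^sup>2)" .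
    qed
    finally show "(\<Sum>s\<in>S. aw s * z s * EXl s) \<le> (gbar - 1) * pmin * V U" by (simp add: mult.assoc)
    have "(\<Sum>s\<in>S. aw s * EXq s) \<le> (\<Sum>s\<in>S. aw s * (2 * Acon\<^sup>2 + 2 * (real Lm + 1)\<^sup>2 * card S * V U / bmin))"
    proof (intro sum_mono mult_left_mono)
      fix s assume s: "s \<in> S"
      show "0 \<le> aw s" using aw_pos[OF s] by simp
      have "EXq s \<le> Ex (fst s) (snd s) (\<lambda>_. 2 * Acon\<^sup>2 + 2 * (real Lm + 1)\<^sup>2 * card S * V U / bmin)"
        unfolding EXq_def using Xf_sq_bound[OF U0 s] by (intro Ex_mono) (auto simp: S_def)
      also have "\<dots> = 2 * Acon\<^sup>2 + 2 * (real Lm + 1)\<^sup>2 * card S * V U / bmin"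
        using s by (simp add: Ex_const S_def)
      finally show "EXq s \<le> 2 * Acon\<^sup>2 + 2 * (real Lm + 1)\<^sup>2 * card S * V U / bmin" .
    qed
    also have "\<dots> = (\<Sum>s\<in>S. aw s) * (2 * Acon\<^sup>2 + 2 * (real Lm + 1)\<^sup>2 * card S * V U / bmin)"
      by (simp only: sum_distrib_right[symmetric])
    also have "\<dots> = K1 + K2 * V U"
      unfolding K1_def K2_def using bmin_pos by (simp add: field_simps)
    finally show "(\<Sum>s\<in>S. aw s * EXq s) \<le> K1 + K2 * V U" .
  qed
  also have "\<dots> = (1 - 2 * kap * lr i + K2 * (lr i)\<^sup>2) * V U + K1 * (lr i)\<^sup>2"
    unfolding kap_def l_def by (simp add: algebra_simps)
  finally show ?thesis .
qed

end

lemma meas_stake_fun: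
  fixes D :: "'x::countable pmf" and H :: "'x list \<Rightarrow> 'b::topological_space"
  shows "(\<lambda>\<omega>. H (stake n \<omega>)) \<in> borel_measurable (stream_space (measure_pmf D))"
proof -
  have "stake n \<in> measurable (stream_space (measure_pmf D)) (count_space UNIV)"
    using measurable_stake[where 'a='x, of n]
    by (simp add: measurable_cong_sets[OF sets_stream_space_cong] )
  then show ?thesis by (rule measurable_compose) simp
qed

lemma peel:
  fixes D :: "'x::countable pmf" and F :: "'x list \<Rightarrow> ennreal"
  shows "(\<integral>\<^sup>+\<omega>. F (stake (Suc n) \<omega>) \<partial>stream_space (measure_pmf D))
       = (\<integral>\<^sup>+x. (\<integral>\<^sup>+\<omega>. F (x # stake n \<omega>) \<partial>stream_space (measure_pmf D)) \<partial>measure_pmf D)"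
  by (subst prob_space.nn_integral_stream_space[OF prob_space_measure_pmf]) (auto intro: meas_stake_fun)

lemma emeasure_stream_one[simp]:
  fixes D :: "'x::countable pmf"
  shows "emeasure (stream_space (measure_pmf D)) (space (stream_space (measure_pmf D))) = 1"
  using prob_space.emeasure_space_1[OF prob_space.prob_space_stream_space[OF prob_space_measure_pmf]] .

lemma int_const_stream:
  fixes D :: "'x::countable pmf"
  shows "(\<integral>\<^sup>+\<omega>. c \<partial>stream_space (measure_pmf D)) = c"
  by simp

primrec run :: "(nat \<Rightarrow> 's \<Rightarrow> 'x \<Rightarrow> 's) \<Rightarrow> nat \<Rightarrow> 's \<Rightarrow> 'x list \<Rightarrow> 's" where
  "run st i u [] = u"
| "run st i u (x # xs) = run st (Suc i) (st i u x) xs"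

lemma run_snoc: "run st i u (xs @ [x]) = st (i + length xs) (run st i u xs) x"
  by (induction xs arbitrary: i u) auto

lemma stake_Suc_snoc: "stake (Suc n) \<omega> = stake n \<omega> @ [\<omega> !! n]"
  by (induction n arbitrary: \<omega>) auto

lemma last_step:
  fixes D :: "'x::countable pmf" and f :: "'s \<Rightarrow> ennreal"
  shows "(\<integral>\<^sup>+\<omega>. f (run st i u (stake (Suc n) \<omega>)) \<partial>stream_space (measure_pmf D))
       = (\<integral>\<^sup>+\<omega>. (\<integral>\<^sup>+x. f (st (i+n) (run st i u (stake n \<omega>)) x) \<partial>measure_pmf D) \<partial>stream_space (measure_pmf D))"
proof (induction n arbitrary: i u)
  case 0
  show ?case
    using peel[where F="\<lambda>xs. f (run st i u xs)" and n=0 and D=D]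
    by (simp add: int_const_stream)
next
  case (Suc n)
  have "(\<integral>\<^sup>+\<omega>. f (run st i u (stake (Suc (Suc n)) \<omega>)) \<partial>stream_space (measure_pmf D))
     = (\<integral>\<^sup>+x. (\<integral>\<^sup>+\<omega>. f (run st (Suc i) (st i u x) (stake (Suc n) \<omega>)) \<partial>stream_space (measure_pmf D)) \<partial>measure_pmf D)"
    using peel[where F="\<lambda>xs. f (run st i u xs)" and n="Suc n" and D=D] by simp
  also have "\<dots> = (\<integral>\<^sup>+x. (\<integral>\<^sup>+\<omega>. (\<integral>\<^sup>+y. f (st (Suc i + n) (run st (Suc i) (st i u x) (stake n \<omega>)) y) \<partial>measure_pmf D) \<partial>stream_space (measure_pmf D)) \<partial>measure_pmf D)"
    by (simp only: Suc.IH)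
  also have "\<dots> = (\<integral>\<^sup>+\<omega>. (\<integral>\<^sup>+y. f (st (i + Suc n) (run st i u (stake (Suc n) \<omega>)) y) \<partial>measure_pmf D) \<partial>stream_space (measure_pmf D))"
    using peel[where F="\<lambda>xs. (\<integral>\<^sup>+y. f (st (i + Suc n) (run st i u xs) y) \<partial>measure_pmf D)" and n=n and D=D] by simp
  finally show ?case .
qed

lemma take_stake_le: "k \<le> m \<Longrightarrow> take k (stake m \<omega>) = stake k \<omega>"
  by (simp add: take_stake min_def)

lemma ville0:
  fixes D :: "'x::countable pmf" and Zt :: "nat \<Rightarrow> 's \<Rightarrow> ennreal"
  assumes inv: "\<And>i u x. Inv u \<Longrightarrow> Inv (st i u x)"
    and sup: "\<And>i u. Inv u \<Longrightarrow> (\<integral>\<^sup>+x. Zt (Suc i) (st i u x) \<partial>measure_pmf D) \<le> Zt i u"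
  shows "Inv u \<Longrightarrow> \<epsilon> * (\<integral>\<^sup>+\<omega>. of_bool (\<exists>k\<le>m. \<epsilon> \<le> Zt (i+k) (run st i u (take k (stake m \<omega>)))) \<partial>stream_space (measure_pmf D))
      \<le> Zt i u"
proof (induction m arbitrary: i u)
  case 0
  then show ?case by (auto simp: int_const_stream)
next
  case (Suc m)
  show ?case
  proof (cases "\<epsilon> \<le> Zt i u")
    case True
    have "(\<integral>\<^sup>+\<omega>. of_bool (\<exists>k\<le>Suc m. \<epsilon> \<le> Zt (i+k) (run st i u (take k (stake (Suc m) \<omega>)))) \<partial>stream_space (measure_pmf D)) = 1"
      using True by (subst int_const_stream[symmetric, of 1 D]) (intro nn_integral_cong, auto intro: exI[of _ 0])
    then show ?thesis using True by simp
  next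
    case False
    have eq: "\<And>x xs. of_bool (\<exists>k\<le>Suc m. \<epsilon> \<le> Zt (i+k) (run st i u (take k (x # xs))))
          = (of_bool (\<exists>k\<le>m. \<epsilon> \<le> Zt (Suc i+k) (run st (Suc i) (st i u x) (take k xs))) :: ennreal)"
    proof -
      fix x xs
      have "(\<exists>k\<le>Suc m. \<epsilon> \<le> Zt (i+k) (run st i u (take k (x # xs))))
          \<longleftrightarrow> (\<exists>k\<le>m. \<epsilon> \<le> Zt (Suc i+k) (run st (Suc i) (st i u x) (take k xs)))"
      proof
        assume "\<exists>k\<le>Suc m. \<epsilon> \<le> Zt (i+k) (run st i u (take k (x # xs)))"
        then obtain k where k: "k \<le> Suc m" "\<epsilon> \<le> Zt (i+k) (run st i u (take k (x # xs)))" by blast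
        then obtain k' where "k = Suc k'" using False by (cases k) auto
        then show "\<exists>k\<le>m. \<epsilon> \<le> Zt (Suc i+k) (run st (Suc i) (st i u x) (take k xs))"
          using k by (intro exI[of _ k']) auto
      next
        assume "\<exists>k\<le>m. \<epsilon> \<le> Zt (Suc i+k) (run st (Suc i) (st i u x) (take k xs))"
        then obtain k where k: "k \<le> m" "\<epsilon> \<le> Zt (Suc i+k) (run st (Suc i) (st i u x) (take k xs))" by blast
        then show "\<exists>k\<le>Suc m. \<epsilon> \<le> Zt (i+k) (run st i u (take k (x # xs)))"
          by (intro exI[of _ "Suc k"]) auto
      qed
      then show "?thesis x xs" by simp
    qed
    have "\<epsilon> * (\<integral>\<^sup>+\<omega>. of_bool (\<exists>k\<le>Suc m. \<epsilon> \<le> Zt (i+k) (run st i u (take k (stake (Suc m) \<omega>)))) \<partial>stream_space (measure_pmf D))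
      = \<epsilon> * (\<integral>\<^sup>+x. (\<integral>\<^sup>+\<omega>. of_bool (\<exists>k\<le>m. \<epsilon> \<le> Zt (Suc i+k) (run st (Suc i) (st i u x) (take k (stake m \<omega>)))) \<partial>stream_space (measure_pmf D)) \<partial>measure_pmf D)"
      using peel[where F="\<lambda>xs. of_bool (\<exists>k\<le>Suc m. \<epsilon> \<le> Zt (i+k) (run st i u (take k xs)))" and n=m and D=D]
      by (simp only: eq)
    also have "\<dots> = (\<integral>\<^sup>+x. \<epsilon> * (\<integral>\<^sup>+\<omega>. of_bool (\<exists>k\<le>m. \<epsilon> \<le> Zt (Suc i+k) (run st (Suc i) (st i u x) (take k (stake m \<omega>)))) \<partial>stream_space (measure_pmf D)) \<partial>measure_pmf D)"
      by (simp add: nn_integral_cmult)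
    also have "\<dots> \<le> (\<integral>\<^sup>+x. Zt (Suc i) (st i u x) \<partial>measure_pmf D)"
      by (intro nn_integral_mono Suc.IH inv Suc.prems)
    also have "\<dots> \<le> Zt i u" using sup Suc.prems by blast
    finally show ?thesis .
  qed
qed

lemma villeN:
  fixes D :: "'x::countable pmf" and Zt :: "nat \<Rightarrow> 's \<Rightarrow> ennreal"
  assumes inv: "\<And>i u x. Inv u \<Longrightarrow> Inv (st i u x)"
    and sup: "\<And>i u. Inv u \<Longrightarrow> (\<integral>\<^sup>+x. Zt (Suc i) (st i u x) \<partial>measure_pmf D) \<le> Zt i u"
  shows "Inv u \<Longrightarrow> \<epsilon> * (\<integral>\<^sup>+\<omega>. of_bool (\<exists>k\<le>m. \<epsilon> \<le> Zt (i+n+k) (run st i u (take (n+k) (stake (n+m) \<omega>)))) \<partial>stream_space (measure_pmf D))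
      \<le> (\<integral>\<^sup>+\<omega>. Zt (i+n) (run st i u (stake n \<omega>)) \<partial>stream_space (measure_pmf D))"
proof (induction n arbitrary: i u)
  case 0
  then show ?case using ville0[where Inv=Inv and st=st and D=D and Zt=Zt, OF inv sup, of u \<epsilon> m i] by (simp add: int_const_stream)
next
  case (Suc n)
  have "\<epsilon> * (\<integral>\<^sup>+\<omega>. of_bool (\<exists>k\<le>m. \<epsilon> \<le> Zt (i+Suc n+k) (run st i u (take (Suc n+k) (stake (Suc n+m) \<omega>)))) \<partial>stream_space (measure_pmf D))
    = \<epsilon> * (\<integral>\<^sup>+x. (\<integral>\<^sup>+\<omega>. of_bool (\<exists>k\<le>m. \<epsilon> \<le> Zt (Suc i+n+k) (run st (Suc i) (st i u x) (take (n+k) (stake (n+m) \<omega>)))) \<partial>stream_space (measure_pmf D)) \<partial>measure_pmf D)"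
    using peel[where F="\<lambda>xs. of_bool (\<exists>k\<le>m. \<epsilon> \<le> Zt (i+Suc n+k) (run st i u (take (Suc n+k) xs)))" and n="n+m" and D=D]
    by simp
  also have "\<dots> = (\<integral>\<^sup>+x. \<epsilon> * (\<integral>\<^sup>+\<omega>. of_bool (\<exists>k\<le>m. \<epsilon> \<le> Zt (Suc i+n+k) (run st (Suc i) (st i u x) (take (n+k) (stake (n+m) \<omega>)))) \<partial>stream_space (measure_pmf D)) \<partial>measure_pmf D)"
    by (simp add: nn_integral_cmult)
  also have "\<dots> \<le> (\<integral>\<^sup>+x. (\<integral>\<^sup>+\<omega>. Zt (Suc i+n) (run st (Suc i) (st i u x) (stake n \<omega>)) \<partial>stream_space (measure_pmf D)) \<partial>measure_pmf D)"
    by (intro nn_integral_mono Suc.IH inv Suc.prems)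
  also have "\<dots> = (\<integral>\<^sup>+\<omega>. Zt (i+Suc n) (run st i u (stake (Suc n) \<omega>)) \<partial>stream_space (measure_pmf D))"
    using peel[where F="\<lambda>xs. Zt (i+Suc n) (run st i u xs)" and n=n and D=D] by simp
  finally show ?case .
qed


lemma nonsummable_partial_unbounded:
  fixes f :: "nat \<Rightarrow> real"
  assumes f0: "\<And>n. 0 \<le> f n" and ns: "\<not> summable f"
  shows "\<exists>n0. \<forall>n\<ge>n0. X < (\<Sum>i<n. f i)"
proof -
  obtain n0 where n0: "X < (\<Sum>i<n0. f i)"
  proof (rule ccontr)
    assume "\<not> thesis"
    then have "\<And>n. (\<Sum>i<n. f i) \<le> X" using that by (meson not_less)
    then have "summable f" using f0 by (intro summableI_nonneg_bounded) auto
    then show False using ns by simp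
  qed
  have "\<forall>n\<ge>n0. X < (\<Sum>i<n. f i)"
  proof (intro allI impI)
    fix n assume "n0 \<le> n"
    then have "(\<Sum>i<n0. f i) \<le> (\<Sum>i<n. f i)" using f0 by (intro sum_mono2) auto
    then show "X < (\<Sum>i<n. f i)" using n0 by simp
  qed
  then show ?thesis by blast
qed

lemma prod_one_minus_le:
  fixes x :: "nat \<Rightarrow> real"
  assumes "\<And>k. 0 \<le> x k" "\<And>k. x k \<le> 1"
  shows "(\<Prod>k<n. (1 - x k)) \<le> 1 / (1 + (\<Sum>k<n. x k))"
proof -
  have "(\<Prod>k<n. (1 - x k)) \<le> (\<Prod>k<n. exp (- x k))"
  proof (rule prod_mono)
    fix k show "0 \<le> 1 - x k \<and> 1 - x k \<le> exp (- x k)"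
      using assms[of k] exp_ge_add_one_self[of "- x k"] by simp
  qed
  also have "\<dots> = exp (- (\<Sum>k<n. x k))" by (simp add: exp_sum sum_negf[symmetric])
  also have "\<dots> \<le> 1 / (1 + (\<Sum>k<n. x k))"
  proof -
    have t0: "0 \<le> (\<Sum>k<n. x k)" using assms by (intro sum_nonneg) auto
    have "1 + (\<Sum>k<n. x k) \<le> exp (\<Sum>k<n. x k)" by simp
    then have "exp (- (\<Sum>k<n. x k)) * (1 + (\<Sum>k<n. x k)) \<le> 1"
      by (simp add: exp_minus field_simps)
    then show ?thesis using t0 by (simp add: field_simps)
  qed
  finally show ?thesis .
qed

lemma det_conv:
  fixes l e :: "nat \<Rightarrow> real"
  assumes l0: "\<And>n. 0 \<le> l n" and ns: "\<not> summable l" and s2: "summable (\<lambda>n. (l n)\<^sup>2)"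
    and kp: "0 < \<kappa>" and K1: "0 \<le> K1" and K2: "0 \<le> K2" and e0: "\<And>n. 0 \<le> e n"
    and rec: "\<And>n. e (Suc n) \<le> max (1 - 2 * \<kappa> * l n + K2 * (l n)\<^sup>2) 0 * e n + K1 * (l n)\<^sup>2"
  shows "e \<longlonglongrightarrow> 0"
proof -
  define b where "b n = K1 * (l n)\<^sup>2" for n
  have b0: "0 \<le> b n" for n unfolding b_def using K1 by simp
  have sb: "summable b" unfolding b_def using s2 by (rule summable_mult)
  have "(\<lambda>n. (l n)\<^sup>2) \<longlonglongrightarrow> 0" using s2 by (rule summable_LIMSEQ_zero)
  then have "(\<lambda>n. sqrt ((l n)\<^sup>2)) \<longlonglongrightarrow> sqrt 0" by (rule tendsto_real_sqrt)
  then have l_lim: "l \<longlonglongrightarrow> 0" using l0 by simp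
  define \<delta> where "\<delta> = min (\<kappa> / (K2 + 1)) (1 / \<kappa>)"
  have dpos: "0 < \<delta>" unfolding \<delta>_def using kp K2 by simp
  obtain N0 where N0: "\<And>n. n \<ge> N0 \<Longrightarrow> l n < \<delta>"
    using order_tendstoD(2)[OF l_lim dpos] unfolding eventually_sequentially by blast
  have rec2: "e (Suc n) \<le> (1 - \<kappa> * l n) * e n + b n" and kl1: "0 \<le> 1 - \<kappa> * l n" "1 - \<kappa> * l n \<le> 1"
    if n: "n \<ge> N0" for n
  proof -
    have ln: "l n \<le> \<kappa> / (K2 + 1)" "l n \<le> 1 / \<kappa>" using N0[OF n] unfolding \<delta>_def by auto
    have "K2 * l n \<le> (K2 + 1) * l n" using l0[of n] by (simp add: algebra_simps)
    also have "\<dots> \<le> \<kappa>" using ln(1) K2 by (simp add: field_simps)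
    finally have "K2 * l n * l n \<le> \<kappa> * l n" using l0[of n] by (intro mult_right_mono) auto
    then have a1: "1 - 2 * \<kappa> * l n + K2 * (l n)\<^sup>2 \<le> 1 - \<kappa> * l n" by (simp add: power2_eq_square algebra_simps)
    show "0 \<le> 1 - \<kappa> * l n" using ln(2) kp by (simp add: field_simps)
    then have "max (1 - 2 * \<kappa> * l n + K2 * (l n)\<^sup>2) 0 \<le> 1 - \<kappa> * l n" using a1 by simp
    then have "max (1 - 2 * \<kappa> * l n + K2 * (l n)\<^sup>2) 0 * e n \<le> (1 - \<kappa> * l n) * e n"
      using e0 by (intro mult_right_mono) auto
    then show "e (Suc n) \<le> (1 - \<kappa> * l n) * e n + b n" using rec[of n] unfolding b_def by simp
    show "1 - \<kappa> * l n \<le> 1" using kp l0[of n] by simp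
  qed
  show ?thesis
  proof (rule order_tendstoI)
    fix a :: real assume a: "a < 0"
    show "eventually (\<lambda>n. a < e n) sequentially"
    proof (intro always_eventually allI)
      fix n show "a < e n" using a e0[of n] by linarith
    qed
  next
    fix \<epsilon> :: real assume eps: "0 < \<epsilon>"
    obtain N1 where N1: "\<And>n. n \<ge> N1 \<Longrightarrow> norm (\<Sum>i. b (i + n)) < \<epsilon> / 2"
      using suminf_exist_split[OF _ sb, of "\<epsilon>/2"] eps by auto
    define M where "M = max N0 N1"
    have tail: "(\<Sum>k<n. b (M + k)) < \<epsilon> / 2" for n
    proof -
      have sbM: "summable (\<lambda>i. b (i + M))" using sb by (rule summable_ignore_initial_segment)
      have "(\<Sum>k<n. b (M + k)) \<le> (\<Sum>i. b (i + M))"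
        using sum_le_suminf[OF sbM, of "{..<n}"] b0 by (simp add: add.commute)
      moreover have "(\<Sum>i. b (i + M)) < \<epsilon> / 2" using N1[of M] b0 sbM unfolding M_def
        by (simp add: suminf_nonneg)
      ultimately show ?thesis by simp
    qed
    have claim: "e (M + n) \<le> (\<Prod>k<n. (1 - \<kappa> * l (M + k))) * e M + (\<Sum>k<n. b (M + k))" for n
    proof (induction n)
      case 0 then show ?case by simp
    next
      case (Suc n)
      have MN: "M + n \<ge> N0" unfolding M_def by simp
      have P0: "0 \<le> (\<Prod>k<n. (1 - \<kappa> * l (M + k)))"
        using kl1 unfolding M_def by (intro prod_nonneg) auto
      have S0: "0 \<le> (\<Sum>k<n. b (M + k))" using b0 by (intro sum_nonneg) auto
      have "e (M + Suc n) \<le> (1 - \<kappa> * l (M + n)) * e (M + n) + b (M + n)" using rec2[OF MN] by simp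
      also have "\<dots> \<le> (1 - \<kappa> * l (M + n)) * ((\<Prod>k<n. (1 - \<kappa> * l (M + k))) * e M + (\<Sum>k<n. b (M + k))) + b (M + n)"
        using Suc.IH kl1(1)[OF MN] by (intro add_mono mult_left_mono) auto
      also have "\<dots> \<le> (\<Prod>k<Suc n. (1 - \<kappa> * l (M + k))) * e M + (\<Sum>k<Suc n. b (M + k))"
      proof -
        have "(1 - \<kappa> * l (M + n)) * (\<Sum>k<n. b (M + k)) \<le> (\<Sum>k<n. b (M + k))"
          using kl1[OF MN] S0 by (simp add: mult_left_le_one_le)
        then show ?thesis by (simp add: algebra_simps)
      qed
      finally show ?case .
    qed
    have sl: "\<not> summable (\<lambda>k. l (k + M))" using ns by (simp add: summable_iff_shift)
    define X where "X = 2 * e M / (\<kappa> * \<epsilon>)"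
    obtain n0 where n0: "\<And>n. n \<ge> n0 \<Longrightarrow> X < (\<Sum>k<n. l (k + M))"
      using nonsummable_partial_unbounded[OF l0 sl, of X] by blast
    have "e n < \<epsilon>" if n: "n \<ge> M + n0" for n
    proof -
      define m where "m = n - M"
      have nm: "n = M + m" "m \<ge> n0" using n unfolding m_def by auto
      have xs: "0 \<le> \<kappa> * l (M + k)" "\<kappa> * l (M + k) \<le> 1" for k
        using kl1[of "M + k"] kp l0[of "M+k"] unfolding M_def by auto
      have "(\<Prod>k<m. (1 - \<kappa> * l (M + k))) \<le> 1 / (1 + (\<Sum>k<m. \<kappa> * l (M + k)))"
        by (rule prod_one_minus_le) (use xs in auto)
      also have "(\<Sum>k<m. \<kappa> * l (M + k)) = \<kappa> * (\<Sum>k<m. l (k + M))"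
        by (simp add: sum_distrib_left add.commute)
      finally have P: "(\<Prod>k<m. (1 - \<kappa> * l (M + k))) \<le> 1 / (1 + \<kappa> * (\<Sum>k<m. l (k + M)))" .
      have Xm: "X < (\<Sum>k<m. l (k + M))" using n0 nm by auto
      have X0: "0 \<le> X" unfolding X_def using e0 kp eps by simp
      have "(\<Prod>k<m. (1 - \<kappa> * l (M + k))) * e M \<le> 1 / (1 + \<kappa> * X) * e M"
      proof (intro mult_right_mono e0)
        have "1 + \<kappa> * X \<le> 1 + \<kappa> * (\<Sum>k<m. l (k + M))" using Xm kp by simp
        moreover have "0 < 1 + \<kappa> * X" using X0 kp by (simp add: add_pos_nonneg)
        ultimately have "1 / (1 + \<kappa> * (\<Sum>k<m. l (k + M))) \<le> 1 / (1 + \<kappa> * X)"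
          by (intro divide_left_mono) (auto intro: mult_pos_pos)
        then show "(\<Prod>k<m. (1 - \<kappa> * l (M + k))) \<le> 1 / (1 + \<kappa> * X)" using P by linarith
      qed
      also have "1 / (1 + \<kappa> * X) * e M \<le> \<epsilon> / 2"
      proof -
        have "\<kappa> * X = 2 * e M / \<epsilon>" unfolding X_def using kp eps by (simp add: field_simps)
        then have k2: "1 + \<kappa> * X = (\<epsilon> + 2 * e M) / \<epsilon>" using eps by (simp add: field_simps)
        have "1 / (1 + \<kappa> * X) * e M = \<epsilon> / (\<epsilon> + 2 * e M) * e M"
          unfolding k2 by simp
        also have "\<dots> \<le> \<epsilon> / 2"
        proof -
          have "2 * \<epsilon> * e M \<le> \<epsilon> * (\<epsilon> + 2 * e M)" using eps by (simp add: algebra_simps)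
          then show ?thesis using eps e0[of M] by (simp add: field_simps)
        qed
        finally show ?thesis .
      qed
      finally have "(\<Prod>k<m. (1 - \<kappa> * l (M + k))) * e M \<le> \<epsilon> / 2" .
      then show ?thesis using claim[of m] tail[of m] nm by simp
    qed
    then show "eventually (\<lambda>n. e n < \<epsilon>) sequentially" unfolding eventually_sequentially by blast
  qed
qed


context bms begin

abbreviation "DD \<equiv> step_dist p sel"
abbreviation "SS \<equiv> stream_space (measure_pmf (step_dist p sel))"

definition Inv :: "('q \<times> 'a \<Rightarrow> real) \<Rightarrow> bool" where "Inv u \<longleftrightarrow> (\<forall>t\<in>S. 0 \<le> u t)"

lemma lr0: "0 \<le> lr i" and lr1: "lr i \<le> 1" using lr01 by auto

lemma Inv_step: "Inv u \<Longrightarrow> Inv (stepU i u x)"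
  unfolding Inv_def
proof (intro ballI)
  fix t assume inv: "\<forall>t\<in>S. 0 \<le> u t" and t: "t \<in> S"
  show "0 \<le> stepU i u x t"
  proof (cases "t = fst x")
    case True
    have "stepU i u x t = (1 - lr i) * u t + lr i * (c (fst t) (snd t) + sum_list (map (\<lambda>y. u (y, sig y)) (snd x)))"
      unfolding stepU_def Xf_def using True by (simp add: algebra_simps)
    moreover have "0 \<le> c (fst t) (snd t)" using t cpos by (auto simp: S_def less_imp_le)
    moreover have "0 \<le> sum_list (map (\<lambda>y. u (y, sig y)) (snd x))" using inv S_sig by (intro sum_list_nonneg) auto
    ultimately show ?thesis using inv t lr0[of i] lr1[of i] by (simp add: add_nonneg_nonneg mult_nonneg_nonneg)
  next
    case False then show ?thesis unfolding stepU_def using inv t by simp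
  qed
qed

lemma Inv_run: "Inv u \<Longrightarrow> Inv (run stepU i u xs)"
  by (induction xs arbitrary: i u) (auto intro: Inv_step)

lemma run_Suc: "run st 0 u (stake (Suc n) \<omega>) = st n (run st 0 u (stake n \<omega>)) (\<omega> !! n)"
  by (simp only: stake_Suc_snoc run_snoc) simp

lemma Q_le_U:
  assumes "s \<in> S"
  shows "qlearn Act c lr Q0 \<omega> n s \<le> run stepU 0 Q0 (stake n \<omega>) s"
  using assms
proof (induction n arbitrary: s)
  case 0 then show ?case by simp
next
  case (Suc n)
  define Q where "Q = qlearn Act c lr Q0 \<omega> n"
  define U where "U = run stepU 0 Q0 (stake n \<omega>)"
  define qa where "qa = fst (\<omega> !! n)"
  define \<beta> where "\<beta> = snd (\<omega> !! n)"
  have QU: "\<And>t. t \<in> S \<Longrightarrow> Q t \<le> U t" unfolding Q_def U_def using Suc.IH by blast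
  have Qs: "qlearn Act c lr Q0 \<omega> (Suc n) = Q(qa := (1 - lr n) * Q qa +
               lr n * (c (fst qa) (snd qa) + (\<Sum>j<length \<beta>. Min ((\<lambda>a'. Q (\<beta> ! j, a')) ` Act (\<beta> ! j)))))"
    unfolding Q_def qa_def \<beta>_def by (simp add: Let_def)
  have Us: "run stepU 0 Q0 (stake (Suc n) \<omega>) = U(qa := (1 - lr n) * U qa + lr n * (c (fst qa) (snd qa) + sum_list (map (\<lambda>x. U (x, sig x)) \<beta>)))"
    unfolding run_Suc U_def[symmetric] stepU_def Xf_def qa_def \<beta>_def by (simp add: algebra_simps)
  show ?case
  proof (cases "s = qa")
    case False then show ?thesis unfolding Qs Us using QU Suc.prems by simp
  next
    case True
    have "(\<Sum>j<length \<beta>. Min ((\<lambda>a'. Q (\<beta> ! j, a')) ` Act (\<beta> ! j))) \<le> (\<Sum>j<length \<beta>. U (\<beta> ! j, sig (\<beta> ! j)))"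
    proof (intro sum_mono)
      fix j
      have "Min ((\<lambda>a'. Q (\<beta> ! j, a')) ` Act (\<beta> ! j)) \<le> Q (\<beta> ! j, sig (\<beta> ! j))"
        using sig_Act by (intro Min_le) auto
      also have "\<dots> \<le> U (\<beta> ! j, sig (\<beta> ! j))" using QU S_sig by blast
      finally show "Min ((\<lambda>a'. Q (\<beta> ! j, a')) ` Act (\<beta> ! j)) \<le> U (\<beta> ! j, sig (\<beta> ! j))" .
    qed
    also have "\<dots> = sum_list (map (\<lambda>x. U (x, sig x)) \<beta>)"
      by (simp add: sum_list_sum_nth atLeast0LessThan)
    finally have sm: "(\<Sum>j<length \<beta>. Min ((\<lambda>a'. Q (\<beta> ! j, a')) ` Act (\<beta> ! j))) \<le> sum_list (map (\<lambda>x. U (x, sig x)) \<beta>)" .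
    have "(1 - lr n) * Q qa \<le> (1 - lr n) * U qa" using QU Suc.prems True lr1[of n] by (intro mult_left_mono) auto
    moreover have "lr n * (c (fst qa) (snd qa) + (\<Sum>j<length \<beta>. Min ((\<lambda>a'. Q (\<beta> ! j, a')) ` Act (\<beta> ! j))))
        \<le> lr n * (c (fst qa) (snd qa) + sum_list (map (\<lambda>x. U (x, sig x)) \<beta>))"
      using sm lr0[of n] by (intro mult_left_mono) auto
    ultimately show ?thesis unfolding Qs Us using True by simp
  qed
qed

lemma ED_affine: "ED (\<lambda>x. a * f x + b) = a * ED f + b"
proof -
  have "ED (\<lambda>x. a * f x + b) = (\<Sum>s\<in>S. pmf sel s * (a * Ex (fst s) (snd s) (\<lambda>\<beta>. f (s, \<beta>)) + b))"
    unfolding ED_def by (intro sum.cong refl) (auto simp: Ex_add Ex_cmult Ex_const S_def)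
  also have "\<dots> = a * ED f + b * (\<Sum>s\<in>S. pmf sel s)"
    unfolding ED_def by (simp add: algebra_simps sum.distrib sum_distrib_left sum_distrib_right)
  finally show ?thesis by (simp add: sel_sum)
qed

definition acoef :: "nat \<Rightarrow> real" where "acoef i = 1 - 2 * kap * lr i + K2 * (lr i)\<^sup>2"

lemma step_exp:
  assumes "Inv u"
  shows "(\<integral>\<^sup>+x. ennreal (V (stepU i u x)) \<partial>measure_pmf DD) \<le> ennreal (max (acoef i) 0) * ennreal (V u) + ennreal (K1 * (lr i)\<^sup>2)"
proof -
  have "(\<integral>\<^sup>+x. ennreal (V (stepU i u x)) \<partial>measure_pmf DD) = ennreal (ED (\<lambda>x. V (stepU i u x)))"
    by (rule ED_nn) (rule V_nonneg)
  also have "\<dots> \<le> ennreal (acoef i * V u + K1 * (lr i)\<^sup>2)"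
    using drift[OF _ lr0] assms unfolding Inv_def acoef_def by (intro ennreal_leI) auto
  also have "\<dots> \<le> ennreal (max (acoef i) 0 * V u + K1 * (lr i)\<^sup>2)"
    using V_nonneg[of u] by (intro ennreal_leI add_mono mult_right_mono) auto
  also have "\<dots> = ennreal (max (acoef i) 0) * ennreal (V u) + ennreal (K1 * (lr i)\<^sup>2)"
    using V_nonneg[of u] K1_nonneg by (simp add: ennreal_plus ennreal_mult)
  finally show ?thesis .
qed

definition eexp :: "('q \<times> 'a \<Rightarrow> real) \<Rightarrow> nat \<Rightarrow> ennreal" where
  "eexp Q0 n = (\<integral>\<^sup>+\<omega>. ennreal (V (run stepU 0 Q0 (stake n \<omega>))) \<partial>SS)"

lemma eexp_Suc:
  assumes "Inv Q0"
  shows "eexp Q0 (Suc n) \<le> ennreal (max (acoef n) 0) * eexp Q0 n + ennreal (K1 * (lr n)\<^sup>2)"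
proof -
  have "eexp Q0 (Suc n) = (\<integral>\<^sup>+\<omega>. (\<integral>\<^sup>+x. ennreal (V (stepU n (run stepU 0 Q0 (stake n \<omega>)) x)) \<partial>measure_pmf DD) \<partial>SS)"
    unfolding eexp_def using last_step[where f="\<lambda>u. ennreal (V u)" and st=stepU and i=0 and u=Q0 and n=n and D=DD] by simp
  also have "\<dots> \<le> (\<integral>\<^sup>+\<omega>. ennreal (max (acoef n) 0) * ennreal (V (run stepU 0 Q0 (stake n \<omega>))) + ennreal (K1 * (lr n)\<^sup>2) \<partial>SS)"
    using Inv_run[OF assms] by (intro nn_integral_mono step_exp) auto
  also have "\<dots> = ennreal (max (acoef n) 0) * eexp Q0 n + ennreal (K1 * (lr n)\<^sup>2)"
    unfolding eexp_def
    by (subst nn_integral_add) (auto simp: nn_integral_cmult int_const_stream meas_stake_fun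
        intro: measurable_compose[OF _ borel_measurable_times_ennreal])
  finally show ?thesis .
qed


lemma eexp_0: "eexp Q0 0 = ennreal (V Q0)"
  unfolding eexp_def by (simp add: int_const_stream)

lemma eexp_fin: "Inv Q0 \<Longrightarrow> eexp Q0 n < \<top>"
proof (induction n)
  case 0 then show ?case by (simp add: eexp_0)
next
  case (Suc n)
  have "eexp Q0 (Suc n) \<le> ennreal (max (acoef n) 0) * eexp Q0 n + ennreal (K1 * (lr n)\<^sup>2)"
    by (rule eexp_Suc[OF Suc.prems])
  also have "\<dots> < \<top>" using Suc by (simp add: ennreal_mult_less_top)
  finally show ?case .
qed

lemma eexp_lim:
  assumes inv: "Inv Q0" and ns: "\<not> summable lr" and s2: "summable (\<lambda>i. (lr i)\<^sup>2)"
  shows "(\<lambda>n. enn2real (eexp Q0 n)) \<longlonglongrightarrow> 0"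
proof (rule det_conv[where l=lr and \<kappa>=kap and ?K1.0=K1 and ?K2.0=K2])
  show "\<And>n. 0 \<le> lr n" by (rule lr0)
  show "\<not> summable lr" "summable (\<lambda>n. (lr n)\<^sup>2)" by fact+
  show "0 < kap" "0 \<le> K1" "0 \<le> K2" by (rule kap_pos K1_nonneg K2_nonneg)+
  show "\<And>n. 0 \<le> enn2real (eexp Q0 n)" by simp
  fix n
  define E where "E = enn2real (eexp Q0 n)"
  define E' where "E' = enn2real (eexp Q0 (Suc n))"
  define A where "A = max (acoef n) 0"
  have en: "eexp Q0 n = ennreal E" unfolding E_def using eexp_fin[OF inv, of n] by (simp add: ennreal_enn2real_if)
  have en': "eexp Q0 (Suc n) = ennreal E'" unfolding E'_def using eexp_fin[OF inv, of "Suc n"] by (simp add: ennreal_enn2real_if)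
  have h: "ennreal E' \<le> ennreal A * ennreal E + ennreal (K1 * (lr n)\<^sup>2)"
    using eexp_Suc[OF inv, of n] unfolding en en' A_def .
  have A0: "0 \<le> A" "0 \<le> E" unfolding A_def E_def by auto
  have eqq: "ennreal A * ennreal E + ennreal (K1 * (lr n)\<^sup>2) = ennreal (A * E + K1 * (lr n)\<^sup>2)"
    using A0 K1_nonneg by (simp add: ennreal_mult ennreal_plus)
  have h2: "ennreal E' \<le> ennreal (A * E + K1 * (lr n)\<^sup>2)" using h by (simp only: eqq)
  have "0 \<le> A * E + K1 * (lr n)\<^sup>2" using A0 K1_nonneg by simp
  then have "E' \<le> A * E + K1 * (lr n)\<^sup>2" using h2 ennreal_le_iff by blast
  then show "enn2real (eexp Q0 (Suc n)) \<le> max (1 - 2 * kap * lr n + K2 * (lr n)\<^sup>2) 0 * enn2real (eexp Q0 n) + K1 * (lr n)\<^sup>2"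
    unfolding E_def E'_def A_def acoef_def .
qed

lemma frac_aux: "0 < a \<Longrightarrow> 0 < b \<Longrightarrow> (1 / (a * b)) * (b * v + k) = v / a + k / (a * b)" for a b v k :: real
  by (simp add: field_simps)

definition rr :: "nat \<Rightarrow> real" where "rr i = (\<Prod>k<i. (1 + K2 * (lr k)\<^sup>2))"
definition TT :: "nat \<Rightarrow> real" where "TT i = (\<Sum>k. K1 * (lr (k + i))\<^sup>2)"
definition Zt :: "nat \<Rightarrow> ('q \<times> 'a \<Rightarrow> real) \<Rightarrow> ennreal" where "Zt i u = ennreal (V u / rr i + TT i)"

lemma rr_ge1: "1 \<le> rr i" unfolding rr_def using K2_nonneg by (intro prod_ge_1) auto
lemma rr_Suc: "rr (Suc i) = rr i * (1 + K2 * (lr i)\<^sup>2)" unfolding rr_def by simp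
lemma rr_le:
  assumes s2: "summable (\<lambda>i. (lr i)\<^sup>2)"
  shows "rr i \<le> exp (K2 * (\<Sum>k. (lr k)\<^sup>2))"
proof -
  have "rr i \<le> (\<Prod>k<i. exp (K2 * (lr k)\<^sup>2))" unfolding rr_def
    using K2_nonneg by (intro prod_mono) (auto intro: add_nonneg_nonneg)
  also have "\<dots> = exp (K2 * (\<Sum>k<i. (lr k)\<^sup>2))" by (simp add: exp_sum sum_distrib_left)
  also have "\<dots> \<le> exp (K2 * (\<Sum>k. (lr k)\<^sup>2))"
    using K2_nonneg s2 by (auto intro!: mult_left_mono sum_le_suminf)
  finally show ?thesis .
qed

lemma TT_nonneg: "summable (\<lambda>i. (lr i)\<^sup>2) \<Longrightarrow> 0 \<le> TT i"
  unfolding TT_def using K1_nonneg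
  by (intro suminf_nonneg summable_mult summable_ignore_initial_segment) auto

lemma TT_Suc: "summable (\<lambda>i. (lr i)\<^sup>2) \<Longrightarrow> TT i = K1 * (lr i)\<^sup>2 + TT (Suc i)"
proof -
  assume s2: "summable (\<lambda>i. (lr i)\<^sup>2)"
  have sm: "summable (\<lambda>k. K1 * (lr (k + i))\<^sup>2)" using s2 by (intro summable_mult summable_ignore_initial_segment)
  show ?thesis unfolding TT_def using suminf_split_head[OF sm] by simp
qed

lemma TT_lim: "summable (\<lambda>i. (lr i)\<^sup>2) \<Longrightarrow> TT \<longlonglongrightarrow> 0"
  unfolding TT_def using suminf_exist_split2[of "\<lambda>k. K1 * (lr k)\<^sup>2"] by (simp add: summable_mult)

lemma Zt_super:
  assumes s2: "summable (\<lambda>i. (lr i)\<^sup>2)" and inv: "Inv u"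
  shows "(\<integral>\<^sup>+x. Zt (Suc i) (stepU i u x) \<partial>measure_pmf DD) \<le> Zt i u"
proof -
  let ?r = "rr (Suc i)"
  have r1: "1 \<le> ?r" by (rule rr_ge1)
  have "(\<integral>\<^sup>+x. Zt (Suc i) (stepU i u x) \<partial>measure_pmf DD) = ennreal (ED (\<lambda>x. (1 / ?r) * V (stepU i u x) + TT (Suc i)))"
    unfolding Zt_def using TT_nonneg[OF s2] V_nonneg r1
    by (subst ED_nn[symmetric]) (auto intro!: add_nonneg_nonneg divide_nonneg_nonneg)
  also have "\<dots> = ennreal ((1 / ?r) * ED (\<lambda>x. V (stepU i u x)) + TT (Suc i))" by (simp only: ED_affine)
  also have "\<dots> \<le> ennreal (V u / rr i + TT i)"
  proof (intro ennreal_leI)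
    have "ED (\<lambda>x. V (stepU i u x)) \<le> (1 - 2 * kap * lr i + K2 * (lr i)\<^sup>2) * V u + K1 * (lr i)\<^sup>2"
      using drift[OF _ lr0] inv unfolding Inv_def by auto
    also have "\<dots> \<le> (1 + K2 * (lr i)\<^sup>2) * V u + K1 * (lr i)\<^sup>2"
      using kap_pos lr0[of i] V_nonneg[of u] by (intro add_mono mult_right_mono) auto
    finally have ed: "ED (\<lambda>x. V (stepU i u x)) \<le> (1 + K2 * (lr i)\<^sup>2) * V u + K1 * (lr i)\<^sup>2" .
    have pos1: "0 < 1 + K2 * (lr i)\<^sup>2" using K2_nonneg by (simp add: add_pos_nonneg)
    have ri: "0 < rr i" using rr_ge1[of i] by simp
    have "(1 / ?r) * ED (\<lambda>x. V (stepU i u x)) \<le> (1 / ?r) * ((1 + K2 * (lr i)\<^sup>2) * V u + K1 * (lr i)\<^sup>2)"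
      using ed r1 by (intro mult_left_mono) auto
    also have "\<dots> = V u / rr i + K1 * (lr i)\<^sup>2 / ?r"
      unfolding rr_Suc using frac_aux[OF ri pos1] by simp
    also have "\<dots> \<le> V u / rr i + K1 * (lr i)\<^sup>2"
    proof -
      have "K1 * (lr i)\<^sup>2 * 1 \<le> K1 * (lr i)\<^sup>2 * ?r" using r1 K1_nonneg by (intro mult_left_mono) auto
      then have "K1 * (lr i)\<^sup>2 / ?r \<le> K1 * (lr i)\<^sup>2" using r1 by (simp add: pos_divide_le_eq)
      then show ?thesis by simp
    qed
    finally show "(1 / ?r) * ED (\<lambda>x. V (stepU i u x)) + TT (Suc i) \<le> V u / rr i + TT i"
      using TT_Suc[OF s2, of i] by simp
  qed
  finally show ?thesis unfolding Zt_def .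
qed

lemma ville_app:
  assumes s2: "summable (\<lambda>i. (lr i)\<^sup>2)" and inv: "Inv Q0"
  shows "ennreal \<eta> * (\<integral>\<^sup>+\<omega>. of_bool (\<exists>k\<le>m. ennreal \<eta> \<le> Zt (n+k) (run stepU 0 Q0 (stake (n+k) \<omega>))) \<partial>SS)
      \<le> eexp Q0 n + ennreal (TT n)"
proof -
  have "ennreal \<eta> * (\<integral>\<^sup>+\<omega>. of_bool (\<exists>k\<le>m. ennreal \<eta> \<le> Zt (n+k) (run stepU 0 Q0 (stake (n+k) \<omega>))) \<partial>SS)
     = ennreal \<eta> * (\<integral>\<^sup>+\<omega>. of_bool (\<exists>k\<le>m. ennreal \<eta> \<le> Zt (0+n+k) (run stepU 0 Q0 (take (n+k) (stake (n+m) \<omega>)))) \<partial>SS)"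
  proof -
    have "(\<exists>k\<le>m. ennreal \<eta> \<le> Zt (n+k) (run stepU 0 Q0 (stake (n+k) \<omega>)))
      \<longleftrightarrow> (\<exists>k\<le>m. ennreal \<eta> \<le> Zt (0+n+k) (run stepU 0 Q0 (take (n+k) (stake (n+m) \<omega>))))" for \<omega>
      by (auto simp: take_stake_le)
    then show ?thesis by simp
  qed
  also have "\<dots> \<le> (\<integral>\<^sup>+\<omega>. Zt (0+n) (run stepU 0 Q0 (stake n \<omega>)) \<partial>SS)"
    by (rule villeN[where Inv=Inv and st=stepU and D=DD and Zt=Zt, OF Inv_step Zt_super[OF s2] inv])
  also have "\<dots> \<le> (\<integral>\<^sup>+\<omega>. ennreal (V (run stepU 0 Q0 (stake n \<omega>))) + ennreal (TT n) \<partial>SS)"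
  proof (intro nn_integral_mono)
    fix \<omega>
    let ?u = "run stepU 0 Q0 (stake n \<omega>)"
    have "V ?u / rr n \<le> V ?u" using rr_ge1[of n] V_nonneg[of ?u] by (simp add: divide_le_eq mult_le_cancel_left1)
    then show "Zt (0+n) ?u \<le> ennreal (V ?u) + ennreal (TT n)"
      unfolding Zt_def using V_nonneg[of ?u] TT_nonneg[OF s2, of n] by (simp add: ennreal_plus[symmetric] del: ennreal_plus)
  qed
  also have "\<dots> = eexp Q0 n + ennreal (TT n)"
    unfolding eexp_def by (subst nn_integral_add) (auto simp: int_const_stream meas_stake_fun)
  finally show ?thesis .
qed


lemma space_SS: "space SS = UNIV"
  by (simp add: space_stream_space)

lemma sets_SS_stake: "{\<omega>. P (stake N \<omega>)} \<in> sets SS"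
proof -
  have m: "stake N \<in> measurable SS (count_space UNIV)"
    using measurable_stake[where 'a="('q \<times> 'a) \<times> 'q list", of N]
    by (simp add: measurable_cong_sets[OF sets_stream_space_cong])
  have "stake N -` {xs. P xs} \<inter> space SS \<in> sets SS" by (rule measurable_sets[OF m]) simp
  then show ?thesis by (simp add: space_SS vimage_def)
qed

lemma main_AE:
  assumes inv: "Inv Q0" and ns: "\<not> summable lr" and s2: "summable (\<lambda>i. (lr i)\<^sup>2)"
  shows "AE \<omega> in SS. (\<lambda>n. V (run stepU 0 Q0 (stake n \<omega>))) \<longlonglongrightarrow> 0"
proof -
  interpret SSp: prob_space SS
    by (rule prob_space.prob_space_stream_space[OF prob_space_measure_pmf])
  define Rb where "Rb = exp (K2 * (\<Sum>k. (lr k)\<^sup>2))"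
  have Rb0: "0 < Rb" unfolding Rb_def by simp
  define \<eta> where "\<eta> j = 1 / (real (Suc j) * Rb)" for j
  have eta0: "0 < \<eta> j" for j unfolding \<eta>_def using Rb0 by simp
  define g where "g n = enn2real (eexp Q0 n) + TT n" for n
  have g_lim: "g \<longlonglongrightarrow> 0" unfolding g_def using tendsto_add[OF eexp_lim[OF inv ns s2] TT_lim[OF s2]] by simp
  define A where "A j n m = {\<omega>. \<exists>k\<le>m. ennreal (\<eta> j) \<le> Zt (n+k) (run stepU 0 Q0 (stake (n+k) \<omega>))}" for j n m
  have Asets: "A j n m \<in> sets SS" for j n m
  proof -
    have "A j n m = {\<omega>. (\<lambda>xs. \<exists>k\<le>m. ennreal (\<eta> j) \<le> Zt (n+k) (run stepU 0 Q0 (take (n+k) xs))) (stake (n+m) \<omega>)}"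
      unfolding A_def by (auto simp: take_stake_le)
    then show ?thesis using sets_SS_stake by simp
  qed
  have Abound: "ennreal (\<eta> j) * emeasure SS (A j n m) \<le> ennreal (g n)" for j n m
  proof -
    have "emeasure SS (A j n m) = (\<integral>\<^sup>+\<omega>. indicator (A j n m) \<omega> \<partial>SS)"
      using Asets by simp
    also have "\<dots> = (\<integral>\<^sup>+\<omega>. of_bool (\<exists>k\<le>m. ennreal (\<eta> j) \<le> Zt (n+k) (run stepU 0 Q0 (stake (n+k) \<omega>))) \<partial>SS)"
      unfolding A_def by (intro nn_integral_cong) (simp add: indicator_def)
    finally have "ennreal (\<eta> j) * emeasure SS (A j n m) \<le> eexp Q0 n + ennreal (TT n)"
      using ville_app[OF s2 inv, of "\<eta> j" m n] by simp
    also have "\<dots> = ennreal (g n)" unfolding g_def using eexp_fin[OF inv, of n] TT_nonneg[OF s2, of n]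
      by (simp add: ennreal_plus ennreal_enn2real_if)
    finally show ?thesis .
  qed
  have Ainc: "incseq (A j n)" for j n unfolding A_def incseq_def by (auto intro: le_trans)
  have Ubound: "ennreal (\<eta> j) * emeasure SS (\<Union>m. A j n m) \<le> ennreal (g n)" for j n
  proof -
    have "emeasure SS (\<Union>m. A j n m) = (SUP m. emeasure SS (A j n m))"
      using Asets Ainc by (intro SUP_emeasure_incseq[symmetric]) auto
    then show ?thesis using Abound by (simp add: SUP_mult_left_ennreal SUP_least)
  qed
  define N where "N j = (\<Inter>n. \<Union>m. A j n m)" for j
  have Nsets: "N j \<in> sets SS" for j unfolding N_def using Asets by auto
  have N0: "emeasure SS (N j) = 0" for j
  proof -
    have le: "ennreal (\<eta> j) * emeasure SS (N j) \<le> ennreal (g n)" for n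
    proof -
      have "emeasure SS (N j) \<le> emeasure SS (\<Union>m. A j n m)"
        unfolding N_def using Asets by (intro emeasure_mono) auto
      then have "ennreal (\<eta> j) * emeasure SS (N j) \<le> ennreal (\<eta> j) * emeasure SS (\<Union>m. A j n m)"
        by (intro mult_left_mono) auto
      also have "\<dots> \<le> ennreal (g n)" by (rule Ubound)
      finally show ?thesis .
    qed
    have "(\<lambda>n. ennreal (g n)) \<longlonglongrightarrow> ennreal 0" using g_lim by (rule tendsto_ennrealI)
    then have "ennreal (\<eta> j) * emeasure SS (N j) \<le> ennreal 0"
      using le by (intro LIMSEQ_le_const[of "\<lambda>n. ennreal (g n)"]) auto
    then have "ennreal (\<eta> j) * emeasure SS (N j) = 0" by simp
    then show ?thesis using eta0[of j] by (simp add: ennreal_eq_0_iff)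
  qed
  have Nnull: "(\<Union>j. N j) \<in> null_sets SS"
    using N0 Nsets by (intro null_sets_UN) (auto simp: null_sets_def)
  show ?thesis
  proof (rule AE_I'[OF Nnull], safe)
    fix \<omega> assume notconv: "\<not> (\<lambda>n. V (run stepU 0 Q0 (stake n \<omega>))) \<longlonglongrightarrow> 0"
    show "\<omega> \<in> (\<Union>j. N j)"
    proof (rule ccontr)
      assume out: "\<omega> \<notin> (\<Union>j. N j)"
      have "(\<lambda>n. V (run stepU 0 Q0 (stake n \<omega>))) \<longlonglongrightarrow> 0"
      proof (rule LIMSEQ_I)
        fix r :: real assume r: "0 < r"
        obtain j where j: "1 / real (Suc j) < r" using reals_Archimedean[OF r] by (auto simp: field_simps)
        have "\<omega> \<notin> N j" using out by auto
        then obtain n where n: "\<And>m. \<omega> \<notin> A j n m" unfolding N_def by auto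
        have "norm (V (run stepU 0 Q0 (stake k \<omega>)) - 0) < r" if k: "k \<ge> n" for k
        proof -
          let ?u = "run stepU 0 Q0 (stake k \<omega>)"
          have "\<not> ennreal (\<eta> j) \<le> Zt k ?u"
            using n[of "k - n"] k unfolding A_def by (auto intro: exI[of _ "k - n"])
          moreover have "0 \<le> V ?u / rr k + TT k" using V_nonneg[of ?u] rr_ge1[of k] TT_nonneg[OF s2, of k] by simp
          ultimately have "V ?u / rr k + TT k < \<eta> j" unfolding Zt_def using eta0[of j]
            by (simp add: ennreal_less_iff not_le)
          then have "V ?u / rr k < \<eta> j" using TT_nonneg[OF s2, of k] by linarith
          then have "V ?u < \<eta> j * rr k" using rr_ge1[of k] by (simp add: pos_divide_less_eq)
          also have "\<dots> \<le> \<eta> j * Rb" unfolding Rb_def using rr_le[OF s2, of k] eta0[of j]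
            by (intro mult_left_mono) auto
          also have "\<dots> = 1 / real (Suc j)" unfolding \<eta>_def using Rb0 by simp
          finally show ?thesis using V_nonneg[of ?u] j by simp
        qed
        then show "\<exists>no. \<forall>k\<ge>no. norm (V (run stepU 0 Q0 (stake k \<omega>)) - 0) < r" by blast
      qed
      then show False using notconv by simp
    qed
  qed
qed


lemma final:
  assumes Q0nn: "\<forall>q. \<forall>a\<in>Act q. Q0 (q, a) \<ge> 0" and ns: "\<not> summable lr" and s2: "summable (\<lambda>i. (lr i)\<^sup>2)"
  shows "AE \<omega> in SS. \<forall>q. \<forall>a\<in>Act q.
           limsup (\<lambda>i. ereal (qlearn Act c lr Q0 \<omega> i (q, a))) \<le> enn2ereal (Qstar Act p c q a)"
proof -
  have inv: "Inv Q0" unfolding Inv_def S_def using Q0nn by auto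
  show ?thesis
  proof (rule eventually_mono[OF main_AE[OF inv ns s2]], intro allI ballI)
    fix \<omega> q a
    assume conv: "(\<lambda>n. V (run stepU 0 Q0 (stake n \<omega>))) \<longlonglongrightarrow> 0" and a: "a \<in> Act q"
    define s where "s = (q, a)"
    have s: "s \<in> S" unfolding s_def S_def using a by simp
    have W0: "0 \<le> W s" using W_pos[OF s] by simp
    have "limsup (\<lambda>i. ereal (qlearn Act c lr Q0 \<omega> i s)) \<le> ereal (W s) + ereal \<delta>" if d: "0 < \<delta>" for \<delta>
    proof -
      have bd: "0 < bw s * \<delta>\<^sup>2" using bw_pos[OF s] d by simp
      have ev: "eventually (\<lambda>i. V (run stepU 0 Q0 (stake i \<omega>)) < bw s * \<delta>\<^sup>2) sequentially"
        using order_tendstoD(2)[OF conv bd] .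
      have "eventually (\<lambda>i. ereal (qlearn Act c lr Q0 \<omega> i s) \<le> ereal (W s + \<delta>)) sequentially"
      proof (rule eventually_mono[OF ev])
        fix i
        let ?u = "run stepU 0 Q0 (stake i \<omega>)"
        assume Vi: "V ?u < bw s * \<delta>\<^sup>2"
        have "bw s * (pos (?u s - W s))\<^sup>2 \<le> V ?u"
          unfolding V_def using s bw_pos
          by (intro member_le_sum[where f="\<lambda>t. bw t * (pos (?u t - W t))\<^sup>2"])
             (auto intro!: mult_nonneg_nonneg intro: less_imp_le)
        then have "bw s * (pos (?u s - W s))\<^sup>2 < bw s * \<delta>\<^sup>2" using Vi by linarith
        then have "(pos (?u s - W s))\<^sup>2 < \<delta>\<^sup>2" using bw_pos[OF s] by simp
        then have "pos (?u s - W s) < \<delta>" by (rule power_less_imp_less_base) (use d in simp)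
        then have "?u s < W s + \<delta>" using pos_ge[of "?u s - W s"] by linarith
        moreover have "qlearn Act c lr Q0 \<omega> i s \<le> ?u s" by (rule Q_le_U[OF s])
        ultimately show "ereal (qlearn Act c lr Q0 \<omega> i s) \<le> ereal (W s + \<delta>)" by simp
      qed
      then have "limsup (\<lambda>i. ereal (qlearn Act c lr Q0 \<omega> i s)) \<le> ereal (W s + \<delta>)"
        by (rule Limsup_bounded)
      then show ?thesis by simp
    qed
    then have "limsup (\<lambda>i. ereal (qlearn Act c lr Q0 \<omega> i s)) \<le> ereal (W s)"
      by (rule ereal_le_epsilon2)
    also have "ereal (W s) = enn2ereal (ennreal (W s))" using W0 by simp
    also have "\<dots> \<le> enn2ereal (Qstar Act p c q a)"
      using W_le_Qstar[OF a] unfolding s_def by (simp add: less_eq_ennreal.rep_eq[symmetric])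
    finally show "limsup (\<lambda>i. ereal (qlearn Act c lr Q0 \<omega> i (q, a))) \<le> enn2ereal (Qstar Act p c q a)"
      unfolding s_def .
  qed
qed

end

theorem lemma5:
  fixes Act :: "'q::finite \<Rightarrow> 'a::finite set"
    and p :: "'q \<Rightarrow> 'a \<Rightarrow> 'q list pmf"
    and c :: "'q \<Rightarrow> 'a \<Rightarrow> real"
    and lr :: "nat \<Rightarrow> real"
    and sel :: "('q \<times> 'a) pmf"
    and pmin :: real
    and Q0 :: "'q \<times> 'a \<Rightarrow> real"
  assumes "bmdp Act p c"
    and "\<forall>q. \<forall>a\<in>Act q. Qstar Act p c q a < \<infinity>"
    and "\<forall>i. 0 \<le> lr i \<and> lr i \<le> 1"
    and "\<not> summable lr"
    and "summable (\<lambda>i. (lr i)\<^sup>2)"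
    and "set_pmf sel \<subseteq> {(q, a). a \<in> Act q}"
    and "pmin > 0"
    and "\<forall>q. \<forall>a\<in>Act q. pmf sel (q, a) \<ge> pmin"
    and "\<forall>q. \<forall>a\<in>Act q. Q0 (q, a) \<ge> 0"
  shows "AE \<omega> in stream_space (measure_pmf (step_dist p sel)).
           \<forall>q. \<forall>a\<in>Act q.
             limsup (\<lambda>i. ereal (qlearn Act c lr Q0 \<omega> i (q, a))) \<le> enn2ereal (Qstar Act p c q a)"
proof -
  have "bms Act p c sel pmin lr"
    unfolding bms_def bms_axioms_def bm_def using assms by auto
  then interpret bms Act p c sel pmin lr .
  show ?thesis using final assms by blast
qed


end
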